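(* Let $t\ge3$ be an integer, and let $Q$ be a $(2P_3,C_4,C_6,C_7,T_0,(t+1)\text{-pentagon})$-free $t$-frame with an associated $t$-frame partition $(A;B_1,\dots,B_t;C_1,\dots,C_t)$. Set $B:=B_1\cup\dots\cup B_t$ and $C:=C_1\cup\dots\cup C_t$. Let $A=\{a_1,\dots,a_r\}$ be ordered so that $d_Q(a_r)\le\dots\le d_Q(a_1)$, and for each $i\in\{1,\dots,t\}$ let $B_i=\{b^i_1,\dots,b^i_{r_i}\}$ be ordered so that $d_Q(b^i_{r_i})\le\dots\le d_Q(b^i_1)$ and $C_i=\{c^i_1,\dots,c^i_{s_i}\}$ be ordered so that $d_Q(c^i_{s_i})\le\dots\le d_Q(c^i_1)$. Then: (a) $A,B_1,\dots,B_t,C_1,\dots,C_t$ are cliques; (b) either $A$ is complete to $B$, or all of the following hold: $t=3$; there exists $i^*\in\{1,2,3\}$ such that $B\setminus B_{i^*}\subseteq N_Q(a_r)\cap B\subseteq\dots\subseteq N_Q(a_1)\cap B=B$ (in particular $A$ is complete to $B\setminus B_{i^*}$); and for all $i\in\{1,2,3\}$, $B_i$ is complete to $C_i$; (c) for all $i\in\{1,\dots,t\}$: $\{c^i_1\}\subseteq N_Q(b^i_{r_i})\cap C_i\subseteq\dots\subseteq N_Q(b^i_1)\cap C_i=C_i$, and $\{b^i_1\}\subseteq N_Q(c^i_{s_i})\cap B_i\subseteq\dots\subseteq N_Q(c^i_1)\cap B_i=B_i$; (d) if $A$ is complete to $B$, then $Q$ is a $t$-villa with $t$-villa partition $(A;B_1,\dots,B_t;C_1,\dots,C_t)$;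 (e) if $A$ is not complete to $B$, then $t=3$ and $Q$ is a 5-basket with 5-basket partition $(A;B_1,B_2,B_3;C_1,C_2,C_3;\emptyset)$.
   Context: Graphs are finite, simple, nonnull; $d_Q(v)$ is the degree and $N_Q(v)$ the neighbourhood of $v$ in $Q$. A graph is $(H_1,\dots,H_m)$-free if it has no induced subgraph isomorphic to any $H_i$. $P_k$, $C_k$ are the path and cycle on $k$ vertices; $2P_3$ is two disjoint copies of $P_3$. $T_0$ is the graph with vertices $p,q,u_0,u_1,u_2,u_3,w_1,w_2,w_3$ and edges $pq,pu_0,pu_2,pu_3,qu_1,qu_2,qu_3,u_0w_1,u_1w_1,u_2w_2,u_3w_3,w_1w_2,w_1w_3,w_2w_3$. For $s\ge3$ the $s$-pentagon is the graph on vertices $a,b_1,\dots,b_s,c_1,\dots,c_s$ where $a$ is adjacent to every $b_i$ and no $c_i$, $\{b_i\}$ is stable, $\{c_i\}$ is a clique, and $b_ic_j$ is an edge iff $i=j$. For disjoint vertex sets $X,Y$, $X$ is complete (anticomplete) to $Y$ if every vertex of $X$ is adjacent (nonadjacent) to every vertex of $Y$. $t$-frame ($t\ge3$): a graph $Q$ whose vertex set partitions into nonempty sets $A,B_1,\dots,B_t,C_1,\dots,C_t$ (no condition on adjacency inside a set) such that every vertex of $A$ has a neighbour in at least two of $B_1,\dots,B_t$; $A$ is anticomplete to $C_1\cup\dots\cup C_t$; the $B_i$ are pairwise anticomplete; the $C_i$ are pairwise complete; $B_i$ is anticomplete to $C_j$ for $i\ne j$; and for each $i$, every vertex of $B_i$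 has a neighbour in $A$ and a neighbour in $C_i$, and every vertex of $C_i$ has a neighbour in $B_i$. This is a $t$-frame partition $(A;B_1,\dots,B_t;C_1,\dots,C_t)$. $t$-villa with $t$-villa partition $(A;B_1,\dots,B_t;C_1,\dots,C_t)$: $A,B_i,C_i$ are nonempty cliques partitioning the vertex set, $A$ is complete to $B_1\cup\dots\cup B_t$ and anticomplete to $C_1\cup\dots\cup C_t$; the $B_i$ pairwise anticomplete; the $C_i$ pairwise complete; $B_i$ anticomplete to $C_j$ for $i\ne j$; each $B_i$ can be ordered $\beta_1,\dots,\beta_{r}$ with $\emptyset\ne N(\beta_r)\cap C_i\subseteq\dots\subseteq N(\beta_1)\cap C_i=C_i$. 5-basket with 5-basket partition $(A;B_1,B_2,B_3;C_1,C_2,C_3;F)$: the sets partition the vertex set; $A,B_i,C_i$ are nonempty cliques, $F$ a possibly empty clique; $B_1,B_2,B_3$ pairwise anticomplete; $C_1,C_2,C_3$ pairwise complete; there is $i^*$ such that $A$ is complete to $(B_1\cup B_2\cup B_3)\setminus B_{i^*}$ and $A$ can be ordered $\alpha_1,\dots,\alpha_m$ with $N(\alpha_m)\cap B_{i^*}\subseteq\dots\subseteq N(\alpha_1)\cap B_{i^*}=B_{i^*}$; $A$ anticomplete to $C_1\cup C_2\cup C_3$; each $B_i$ complete to $C_i$ and anticomplete to $C_j$ ($j\ne i$); and there is $j^*$ such that $F$ is complete to $V\setminus(B_{j^*}\cup C_{j^*}\cup F)$ and anticomplete to $B_{j^*}\cup C_{j^*}$. *)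

theory Defs
  imports Main
begin

definition graph :: "'a set \<Rightarrow> ('a \<Rightarrow> 'a \<Rightarrow> bool) \<Rightarrow> bool" where
  "graph V E \<longleftrightarrow> finite V \<and> V \<noteq> {} \<and>
     (\<forall>x y. E x y \<longrightarrow> x \<in> V \<and> y \<in> V) \<and>
     (\<forall>x y. E x y \<longrightarrow> E y x) \<and> (\<forall>x. \<not> E x x)"

definition nbhd :: "'a set \<Rightarrow> ('a \<Rightarrow> 'a \<Rightarrow> bool) \<Rightarrow> 'a \<Rightarrow> 'a set" where
  "nbhd V E v = {u \<in> V. E v u}"

definition deg :: "'a set \<Rightarrow> ('a \<Rightarrow> 'a \<Rightarrow> bool) \<Rightarrow> 'a \<Rightarrow> nat" where
  "deg V E v = card (nbhd V E v)"

definition clique :: "('a \<Rightarrow> 'a \<Rightarrow> bool) \<Rightarrow> 'a set \<Rightarrow> bool" where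
  "clique E X \<longleftrightarrow> (\<forall>x\<in>X. \<forall>y\<in>X. x \<noteq> y \<longrightarrow> E x y)"

definition complete_to :: "('a \<Rightarrow> 'a \<Rightarrow> bool) \<Rightarrow> 'a set \<Rightarrow> 'a set \<Rightarrow> bool" where
  "complete_to E X Y \<longleftrightarrow> (\<forall>x\<in>X. \<forall>y\<in>Y. E x y)"

definition anticomplete_to :: "('a \<Rightarrow> 'a \<Rightarrow> bool) \<Rightarrow> 'a set \<Rightarrow> 'a set \<Rightarrow> bool" where
  "anticomplete_to E X Y \<longleftrightarrow> (\<forall>x\<in>X. \<forall>y\<in>Y. \<not> E x y)"

definition induced_sub :: "'b set \<Rightarrow> ('b \<Rightarrow> 'b \<Rightarrow> bool) \<Rightarrow> 'a set \<Rightarrow> ('a \<Rightarrow> 'a \<Rightarrow> bool) \<Rightarrow> bool" where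
  "induced_sub VH EH V E \<longleftrightarrow> (\<exists>f. inj_on f VH \<and> f ` VH \<subseteq> V \<and>
      (\<forall>x\<in>VH. \<forall>y\<in>VH. EH x y \<longleftrightarrow> E (f x) (f y)))"

definition free_of :: "'b set \<Rightarrow> ('b \<Rightarrow> 'b \<Rightarrow> bool) \<Rightarrow> 'a set \<Rightarrow> ('a \<Rightarrow> 'a \<Rightarrow> bool) \<Rightarrow> bool" where
  "free_of VH EH V E \<longleftrightarrow> \<not> induced_sub VH EH V E"

definition symrel :: "(nat \<times> nat) set \<Rightarrow> nat \<Rightarrow> nat \<Rightarrow> bool" where
  "symrel S x y \<longleftrightarrow> (x, y) \<in> S \<or> (y, x) \<in> S"

definition twoP3_V :: "nat set" where "twoP3_V = {0..5}"
definition twoP3_E :: "nat \<Rightarrow> nat \<Rightarrow> bool" where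
  "twoP3_E = symrel {(0,1),(1,2),(3,4),(4,5)}"

definition cyc_V :: "nat \<Rightarrow> nat set" where "cyc_V k = {0..<k}"
definition cyc_E :: "nat \<Rightarrow> nat \<Rightarrow> nat \<Rightarrow> bool" where
  "cyc_E k x y \<longleftrightarrow> x < k \<and> y < k \<and> (y = (x + 1) mod k \<or> x = (y + 1) mod k)"

text \<open>T0: p=0,q=1,u0=2,u1=3,u2=4,u3=5,w1=6,w2=7,w3=8.\<close>
definition T0_V :: "nat set" where "T0_V = {0..8}"
definition T0_E :: "nat \<Rightarrow> nat \<Rightarrow> bool" where
  "T0_E = symrel {(0,1),(0,2),(0,4),(0,5),(1,3),(1,4),(1,5),(2,6),(3,6),(4,7),(5,8),
                  (6,7),(6,8),(7,8)}"

text \<open>s-pentagon: a=0, b_i=i (1\<le>i\<le>s), c_i=s+i.\<close>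
definition pent_V :: "nat \<Rightarrow> nat set" where "pent_V s = {0..2*s}"
definition pent_E :: "nat \<Rightarrow> nat \<Rightarrow> nat \<Rightarrow> bool" where
  "pent_E s = symrel ({(0, i) | i. 1 \<le> i \<and> i \<le> s}
                    \<union> {(i, s + i) | i. 1 \<le> i \<and> i \<le> s}
                    \<union> {(s + i, s + j) | i j. 1 \<le> i \<and> i \<le> s \<and> 1 \<le> j \<and> j \<le> s \<and> i \<noteq> j})"

definition is_partition3 :: "'a set \<Rightarrow> nat \<Rightarrow> 'a set \<Rightarrow> (nat \<Rightarrow> 'a set) \<Rightarrow> (nat \<Rightarrow> 'a set) \<Rightarrow> bool" where
  "is_partition3 V t A B C \<longleftrightarrow>
     A \<union> (\<Union>i\<in>{1..t}. B i) \<union> (\<Union>i\<in>{1..t}. C i) = V \<and>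
     (\<forall>i\<in>{1..t}. A \<inter> B i = {} \<and> A \<inter> C i = {}) \<and>
     (\<forall>i\<in>{1..t}. \<forall>j\<in>{1..t}. B i \<inter> C j = {}) \<and>
     (\<forall>i\<in>{1..t}. \<forall>j\<in>{1..t}. i \<noteq> j \<longrightarrow> B i \<inter> B j = {} \<and> C i \<inter> C j = {})"

definition frame_partition :: "'a set \<Rightarrow> ('a \<Rightarrow> 'a \<Rightarrow> bool) \<Rightarrow> nat \<Rightarrow> 'a set \<Rightarrow> (nat \<Rightarrow> 'a set) \<Rightarrow> (nat \<Rightarrow> 'a set) \<Rightarrow> bool" where
  "frame_partition V E t A B C \<longleftrightarrow>
     t \<ge> 3 \<and> is_partition3 V t A B C \<and>
     A \<noteq> {} \<and> (\<forall>i\<in>{1..t}. B i \<noteq> {} \<and> C i \<noteq> {}) \<and>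
     (\<forall>a\<in>A. \<exists>i\<in>{1..t}. \<exists>j\<in>{1..t}. i \<noteq> j \<and> (\<exists>b\<in>B i. E a b) \<and> (\<exists>b\<in>B j. E a b)) \<and>
     (\<forall>i\<in>{1..t}. anticomplete_to E A (C i)) \<and>
     (\<forall>i\<in>{1..t}. \<forall>j\<in>{1..t}. i \<noteq> j \<longrightarrow> anticomplete_to E (B i) (B j)) \<and>
     (\<forall>i\<in>{1..t}. \<forall>j\<in>{1..t}. i \<noteq> j \<longrightarrow> complete_to E (C i) (C j)) \<and>
     (\<forall>i\<in>{1..t}. \<forall>j\<in>{1..t}. i \<noteq> j \<longrightarrow> anticomplete_to E (B i) (C j)) \<and>
     (\<forall>i\<in>{1..t}. \<forall>b\<in>B i. (\<exists>a\<in>A. E b a) \<and> (\<exists>c\<in>C i. E b c)) \<and>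
     (\<forall>i\<in>{1..t}. \<forall>c\<in>C i. \<exists>b\<in>B i. E c b)"

definition villa_partition :: "'a set \<Rightarrow> ('a \<Rightarrow> 'a \<Rightarrow> bool) \<Rightarrow> nat \<Rightarrow> 'a set \<Rightarrow> (nat \<Rightarrow> 'a set) \<Rightarrow> (nat \<Rightarrow> 'a set) \<Rightarrow> bool" where
  "villa_partition V E t A B C \<longleftrightarrow>
     is_partition3 V t A B C \<and>
     A \<noteq> {} \<and> clique E A \<and> (\<forall>i\<in>{1..t}. B i \<noteq> {} \<and> C i \<noteq> {} \<and> clique E (B i) \<and> clique E (C i)) \<and>
     complete_to E A (\<Union>i\<in>{1..t}. B i) \<and> anticomplete_to E A (\<Union>i\<in>{1..t}. C i) \<and>
     (\<forall>i\<in>{1..t}. \<forall>j\<in>{1..t}. i \<noteq> j \<longrightarrow> anticomplete_to E (B i) (B j)) \<and>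
     (\<forall>i\<in>{1..t}. \<forall>j\<in>{1..t}. i \<noteq> j \<longrightarrow> complete_to E (C i) (C j)) \<and>
     (\<forall>i\<in>{1..t}. \<forall>j\<in>{1..t}. i \<noteq> j \<longrightarrow> anticomplete_to E (B i) (C j)) \<and>
     (\<forall>i\<in>{1..t}. \<exists>\<beta>. bij_betw \<beta> {1..card (B i)} (B i) \<and>
        nbhd V E (\<beta> (card (B i))) \<inter> C i \<noteq> {} \<and>
        (\<forall>k. 1 \<le> k \<and> k < card (B i) \<longrightarrow> nbhd V E (\<beta> (Suc k)) \<inter> C i \<subseteq> nbhd V E (\<beta> k) \<inter> C i) \<and>
        nbhd V E (\<beta> 1) \<inter> C i = C i)"

definition basket_partition :: "'a set \<Rightarrow> ('a \<Rightarrow> 'a \<Rightarrow> bool) \<Rightarrow> 'a set \<Rightarrow> (nat \<Rightarrow> 'a set) \<Rightarrow> (nat \<Rightarrow> 'a set) \<Rightarrow> 'a set \<Rightarrow> bool" where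
  "basket_partition V E A B C F \<longleftrightarrow>
     A \<union> (\<Union>i\<in>{1..3}. B i) \<union> (\<Union>i\<in>{1..3}. C i) \<union> F = V \<and>
     (\<forall>i\<in>{1..3::nat}. A \<inter> B i = {} \<and> A \<inter> C i = {} \<and> F \<inter> B i = {} \<and> F \<inter> C i = {}) \<and> A \<inter> F = {} \<and>
     (\<forall>i\<in>{1..3::nat}. \<forall>j\<in>{1..3}. B i \<inter> C j = {}) \<and>
     (\<forall>i\<in>{1..3::nat}. \<forall>j\<in>{1..3}. i \<noteq> j \<longrightarrow> B i \<inter> B j = {} \<and> C i \<inter> C j = {}) \<and>
     A \<noteq> {} \<and> clique E A \<and> (\<forall>i\<in>{1..3::nat}. B i \<noteq> {} \<and> C i \<noteq> {} \<and> clique E (B i) \<and> clique E (C i)) \<and>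
     clique E F \<and>
     (\<forall>i\<in>{1..3::nat}. \<forall>j\<in>{1..3}. i \<noteq> j \<longrightarrow> anticomplete_to E (B i) (B j)) \<and>
     (\<forall>i\<in>{1..3::nat}. \<forall>j\<in>{1..3}. i \<noteq> j \<longrightarrow> complete_to E (C i) (C j)) \<and>
     (\<exists>i0\<in>{1..3::nat}. complete_to E A ((\<Union>i\<in>{1..3}. B i) - B i0) \<and>
        (\<exists>\<alpha>. bij_betw \<alpha> {1..card A} A \<and>
          (\<forall>k. 1 \<le> k \<and> k < card A \<longrightarrow> nbhd V E (\<alpha> (Suc k)) \<inter> B i0 \<subseteq> nbhd V E (\<alpha> k) \<inter> B i0) \<and>
          nbhd V E (\<alpha> 1) \<inter> B i0 = B i0)) \<and>
     anticomplete_to E A (\<Union>i\<in>{1..3}. C i) \<and>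
     (\<forall>i\<in>{1..3::nat}. complete_to E (B i) (C i)) \<and>
     (\<forall>i\<in>{1..3::nat}. \<forall>j\<in>{1..3}. i \<noteq> j \<longrightarrow> anticomplete_to E (B i) (C j)) \<and>
     (\<exists>j0\<in>{1..3::nat}. complete_to E F (V - (B j0 \<union> C j0 \<union> F)) \<and>
        anticomplete_to E F (B j0 \<union> C j0))"

end

theory Submission
  imports Defs
begin

lemma induced_by_list:
  assumes "set xs \<subseteq> V" "distinct xs" "VH = {0..<length xs}"
    "\<And>x y. x < length xs \<Longrightarrow> y < length xs \<Longrightarrow> EH x y = E (xs!x) (xs!y)"
  shows "induced_sub VH EH V E"
  unfolding induced_sub_def
proof (intro exI conjI)
  show "inj_on (nth xs) VH" using assms(2,3) by (auto intro!: inj_on_nth)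
  show "nth xs ` VH \<subseteq> V" using assms(1,3) nth_mem by fastforce
  show "\<forall>x\<in>VH. \<forall>y\<in>VH. EH x y = E (xs!x) (xs!y)" using assms(3,4) by auto
qed

lemma chain_order:
  fixes f :: "nat \<Rightarrow> 'a" and d :: "'a \<Rightarrow> nat" and N :: "'a \<Rightarrow> 'b set"
  assumes f: "bij_betw f {1..n} S" and ord: "\<forall>k. 1 \<le> k \<and> k < n \<longrightarrow> d (f (Suc k)) \<le> d (f k)"
    and dN: "\<And>x. x \<in> S \<Longrightarrow> d x = K + card (N x)" and fin: "\<And>x. x \<in> S \<Longrightarrow> finite (N x)"
    and cmp: "\<And>x y. x \<in> S \<Longrightarrow> y \<in> S \<Longrightarrow> N x \<subseteq> N y \<or> N y \<subseteq> N x"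
  shows "\<forall>k. 1 \<le> k \<and> k < n \<longrightarrow> N (f (Suc k)) \<subseteq> N (f k)"
proof (intro allI impI)
  fix k assume k: "1 \<le> k \<and> k < n"
  have in1: "f k \<in> S" "f (Suc k) \<in> S" using f k unfolding bij_betw_def by auto
  have "d (f (Suc k)) \<le> d (f k)" using ord k by blast
  then have c: "card (N (f (Suc k))) \<le> card (N (f k))" using dN[OF in1(1)] dN[OF in1(2)] by simp
  from cmp[OF in1] show "N (f (Suc k)) \<subseteq> N (f k)"
  proof
    assume "N (f k) \<subseteq> N (f (Suc k))"
    then have "N (f k) = N (f (Suc k))" using card_seteq[OF fin[OF in1(2)] _ c] by blast
    then show ?thesis by simp
  qed
qed

lemma chain_mono:
  assumes chain: "\<forall>k. 1 \<le> k \<and> k < n \<longrightarrow> N (f (Suc k)) \<subseteq> N (f k)"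
    and "1 \<le> k" "k \<le> j" "j \<le> n"
  shows "N (f j) \<subseteq> N (f k)"
  using assms(3,4)
proof (induction j rule: dec_induct)
  case base then show ?case by simp
next
  case (step m)
  then have "N (f (Suc m)) \<subseteq> N (f m)" using chain assms(2) by simp
  with step show ?case by simp
qed

locale frm =
  fixes V :: "'a set" and E :: "'a \<Rightarrow> 'a \<Rightarrow> bool" and t :: nat
    and A :: "'a set" and B C :: "nat \<Rightarrow> 'a set"
  assumes G: "graph V E"
    and f2P3: "free_of twoP3_V twoP3_E V E" and fC4: "free_of (cyc_V 4) (cyc_E 4) V E"
    and fC6: "free_of (cyc_V 6) (cyc_E 6) V E" and fC7: "free_of (cyc_V 7) (cyc_E 7) V E"
    and fT0: "free_of T0_V T0_E V E" and fpent: "free_of (pent_V (t + 1)) (pent_E (t + 1)) V E"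
    and frame: "frame_partition V E t A B C"
begin

lemma Esym: "E x y = E y x" using G unfolding graph_def by blast
lemma Esym_imp: "E x y \<Longrightarrow> E y x" using G unfolding graph_def by blast
lemma irr: "\<not> E x x" using G unfolding graph_def by blast
lemma EV: "E x y \<Longrightarrow> x \<in> V \<and> y \<in> V" using G unfolding graph_def by blast
lemma finV: "finite V" using G unfolding graph_def by blast

lemma t3: "3 \<le> t" using frame unfolding frame_partition_def by blast
lemma part: "is_partition3 V t A B C" using frame unfolding frame_partition_def by blast
lemma cover: "A \<union> (\<Union>i\<in>{1..t}. B i) \<union> (\<Union>i\<in>{1..t}. C i) = V"
  using part unfolding is_partition3_def by blast

lemma memV_A: "x \<in> A \<Longrightarrow> x \<in> V" using cover by blast
lemma memV_B: "i \<in> {1..t} \<Longrightarrow> x \<in> B i \<Longrightarrow> x \<in> V" using cover by blast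
lemma memV_C: "i \<in> {1..t} \<Longrightarrow> x \<in> C i \<Longrightarrow> x \<in> V" using cover by blast

lemma dAB: "i \<in> {1..t} \<Longrightarrow> A \<inter> B i = {}" using part unfolding is_partition3_def by blast
lemma dAC: "i \<in> {1..t} \<Longrightarrow> A \<inter> C i = {}" using part unfolding is_partition3_def by blast
lemma dBC: "i \<in> {1..t} \<Longrightarrow> j \<in> {1..t} \<Longrightarrow> B i \<inter> C j = {}" using part unfolding is_partition3_def by blast
lemma dBB: "i \<in> {1..t} \<Longrightarrow> j \<in> {1..t} \<Longrightarrow> i \<noteq> j \<Longrightarrow> B i \<inter> B j = {}" using part unfolding is_partition3_def by blast
lemma dCC: "i \<in> {1..t} \<Longrightarrow> j \<in> {1..t} \<Longrightarrow> i \<noteq> j \<Longrightarrow> C i \<inter> C j = {}" using part unfolding is_partition3_def by blast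

lemma kd_AB: "u \<in> A \<Longrightarrow> v \<in> B j \<Longrightarrow> j \<in> {1..t} \<Longrightarrow> u \<noteq> v" using dAB by blast
lemma kd_BA: "u \<in> B i \<Longrightarrow> v \<in> A \<Longrightarrow> i \<in> {1..t} \<Longrightarrow> u \<noteq> v" using dAB by blast
lemma kd_AC: "u \<in> A \<Longrightarrow> v \<in> C j \<Longrightarrow> j \<in> {1..t} \<Longrightarrow> u \<noteq> v" using dAC by blast
lemma kd_CA: "u \<in> C i \<Longrightarrow> v \<in> A \<Longrightarrow> i \<in> {1..t} \<Longrightarrow> u \<noteq> v" using dAC by blast
lemma kd_BC: "u \<in> B i \<Longrightarrow> v \<in> C j \<Longrightarrow> i \<in> {1..t} \<Longrightarrow> j \<in> {1..t} \<Longrightarrow> u \<noteq> v" using dBC by blast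
lemma kd_CB: "u \<in> C i \<Longrightarrow> v \<in> B j \<Longrightarrow> i \<in> {1..t} \<Longrightarrow> j \<in> {1..t} \<Longrightarrow> u \<noteq> v" using dBC by blast
lemma kd_BB: "u \<in> B i \<Longrightarrow> v \<in> B j \<Longrightarrow> i \<in> {1..t} \<Longrightarrow> j \<in> {1..t} \<Longrightarrow> u = v \<longrightarrow> i = j" using dBB by blast
lemma kd_CC: "u \<in> C i \<Longrightarrow> v \<in> C j \<Longrightarrow> i \<in> {1..t} \<Longrightarrow> j \<in> {1..t} \<Longrightarrow> u = v \<longrightarrow> i = j" using dCC by blast

lemma FP:
  "3 \<le> t" "is_partition3 V t A B C" "A \<noteq> {}" "\<forall>i\<in>{1..t}. B i \<noteq> {} \<and> C i \<noteq> {}"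
  "\<forall>a\<in>A. \<exists>i\<in>{1..t}. \<exists>j\<in>{1..t}. i \<noteq> j \<and> (\<exists>b\<in>B i. E a b) \<and> (\<exists>b\<in>B j. E a b)"
  "\<forall>i\<in>{1..t}. anticomplete_to E A (C i)"
  "\<forall>i\<in>{1..t}. \<forall>j\<in>{1..t}. i \<noteq> j \<longrightarrow> anticomplete_to E (B i) (B j)"
  "\<forall>i\<in>{1..t}. \<forall>j\<in>{1..t}. i \<noteq> j \<longrightarrow> complete_to E (C i) (C j)"
  "\<forall>i\<in>{1..t}. \<forall>j\<in>{1..t}. i \<noteq> j \<longrightarrow> anticomplete_to E (B i) (C j)"
  "\<forall>i\<in>{1..t}. \<forall>b\<in>B i. (\<exists>a\<in>A. E b a) \<and> (\<exists>c\<in>C i. E b c)"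
  "\<forall>i\<in>{1..t}. \<forall>c\<in>C i. \<exists>b\<in>B i. E c b"
  using frame unfolding frame_partition_def by blast+

lemma adj_AC: assumes "u \<in> A" "v \<in> C j" "j \<in> {1..t}" shows "\<not> E u v"
  using FP(6) assms unfolding anticomplete_to_def by blast
lemma adj_CA: assumes "u \<in> C i" "v \<in> A" "i \<in> {1..t}" shows "\<not> E u v"
  using adj_AC[OF assms(2,1,3)] Esym[of u v] by simp
lemma adj_BB: assumes "u \<in> B i" "v \<in> B j" "i \<in> {1..t}" "j \<in> {1..t}" shows "i \<noteq> j \<longrightarrow> \<not> E u v"
  using FP(7) assms unfolding anticomplete_to_def by blast
lemma adj_CC: assumes "u \<in> C i" "v \<in> C j" "i \<in> {1..t}" "j \<in> {1..t}" shows "i \<noteq> j \<longrightarrow> E u v"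
  using FP(8) assms unfolding complete_to_def by blast
lemma adj_BC: assumes "u \<in> B i" "v \<in> C j" "i \<in> {1..t}" "j \<in> {1..t}" shows "i \<noteq> j \<longrightarrow> \<not> E u v"
  using FP(9) assms unfolding anticomplete_to_def by blast
lemma adj_CB: assumes "u \<in> C i" "v \<in> B j" "i \<in> {1..t}" "j \<in> {1..t}" shows "i \<noteq> j \<longrightarrow> \<not> E u v"
  using adj_BC[OF assms(2,1,4,3)] Esym[of u v] by auto

lemma w_nA: "x \<in> B i \<Longrightarrow> i \<in> {1..t} \<Longrightarrow> \<exists>w. w \<in> A \<and> E x w" using FP(10) by blast
lemma w_nC: "x \<in> B i \<Longrightarrow> i \<in> {1..t} \<Longrightarrow> \<exists>w. w \<in> C i \<and> E x w" using FP(10) by blast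
lemma w_nB: "x \<in> C i \<Longrightarrow> i \<in> {1..t} \<Longrightarrow> \<exists>w. w \<in> B i \<and> E x w" using FP(11) by blast
lemma w_two: "x \<in> A \<Longrightarrow> \<exists>p q y z. p \<in> {1..t} \<and> q \<in> {1..t} \<and> y \<in> B p \<and> z \<in> B q \<and> (p \<noteq> q \<and> E x y \<and> E x z)"
  using FP(5) by blast
lemma w_third: "\<exists>k. k \<in> {1..t} \<and> (a \<noteq> b \<longrightarrow> k \<noteq> a \<and> k \<noteq> b)"
proof -
  have "card ({1..t} - {a,b}) \<ge> 1"
  proof -
    have "card ({1..t} - {a,b}) \<ge> card {1..t} - card {a,b}" by (rule diff_card_le_card_Diff) auto
    moreover have "card {a,b} \<le> 2" by (auto simp: card_insert_if)
    ultimately show ?thesis using t3 by simp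
  qed
  then obtain k where "k \<in> {1..t} - {a,b}" by (metis card.empty all_not_in_conv not_one_le_zero)
  then show ?thesis by blast
qed
lemma w_fourth: "4 \<le> t \<Longrightarrow> \<exists>k. k \<in> {1..t} \<and> ((a \<noteq> b \<and> a \<noteq> c \<and> b \<noteq> c) \<longrightarrow> (a \<noteq> b \<and> a \<noteq> c \<and> a \<noteq> k \<and> b \<noteq> c \<and> b \<noteq> k \<and> c \<noteq> k))"
proof -
  assume t4: "4 \<le> t"
  have "card ({1..t} - {a,b,c}) \<ge> 1"
  proof -
    have "card ({1..t} - {a,b,c}) \<ge> card {1..t} - card {a,b,c}" by (rule diff_card_le_card_Diff) auto
    moreover have "card {a,b,c} \<le> 3" by (auto simp: card_insert_if)
    ultimately show ?thesis using t4 by simp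
  qed
  then obtain k where "k \<in> {1..t} - {a,b,c}" by (metis card.empty all_not_in_conv not_one_le_zero)
  then show ?thesis by blast
qed
lemma w_BOf: "i \<in> {1..t} \<Longrightarrow> \<exists>x. x \<in> B i" using FP(4) by blast
lemma w_COf: "i \<in> {1..t} \<Longrightarrow> \<exists>x. x \<in> C i" using FP(4) by blast

lemma noC4:
  assumes "x0 \<in> V" "x1 \<in> V" "x2 \<in> V" "x3 \<in> V"
  shows "\<not> ((((x0 \<noteq> x1 \<and> x0 \<noteq> x2 \<and> x0 \<noteq> x3 \<and> x1 \<noteq> x2 \<and> x1 \<noteq> x3 \<and> x2 \<noteq> x3)) \<and> (E x0 x1) \<and> (\<not> (E x0 x2)) \<and> (E x0 x3) \<and> (E x1 x2) \<and> (\<not> (E x1 x3)) \<and> (E x2 x3)))"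
proof
  assume H: "(((x0 \<noteq> x1 \<and> x0 \<noteq> x2 \<and> x0 \<noteq> x3 \<and> x1 \<noteq> x2 \<and> x1 \<noteq> x3 \<and> x2 \<noteq> x3)) \<and> (E x0 x1) \<and> (\<not> (E x0 x2)) \<and> (E x0 x3) \<and> (E x1 x2) \<and> (\<not> (E x1 x3)) \<and> (E x2 x3))"
  have "induced_sub (cyc_V 4) (cyc_E 4) V E"
  proof (rule induced_by_list[of "[x0,x1,x2,x3]"])
    show "set [x0,x1,x2,x3] \<subseteq> V" using assms by auto
    show "distinct [x0,x1,x2,x3]" using H by simp
    show "cyc_V 4 = {0..<length [x0,x1,x2,x3]}" by (auto simp: cyc_V_def)
    fix x y assume "x < length [x0,x1,x2,x3]" "y < length [x0,x1,x2,x3]"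
    then have "x = 0 \<or> x = 1 \<or> x = 2 \<or> x = 3" "y = 0 \<or> y = 1 \<or> y = 2 \<or> y = 3" by auto
    then show "cyc_E 4 x y = E ([x0,x1,x2,x3]!x) ([x0,x1,x2,x3]!y)" using H by (elim disjE; simp add: cyc_E_def irr Esym)
  qed
  with fC4 show False by (simp add: free_of_def)
qed

lemma noC6:
  assumes "x0 \<in> V" "x1 \<in> V" "x2 \<in> V" "x3 \<in> V" "x4 \<in> V" "x5 \<in> V"
  shows "\<not> ((((x0 \<noteq> x1 \<and> x0 \<noteq> x2 \<and> x0 \<noteq> x3 \<and> x0 \<noteq> x4 \<and> x0 \<noteq> x5 \<and> x1 \<noteq> x2 \<and> x1 \<noteq> x3 \<and> x1 \<noteq> x4 \<and> x1 \<noteq> x5 \<and> x2 \<noteq> x3 \<and> x2 \<noteq> x4 \<and> x2 \<noteq> x5 \<and> x3 \<noteq> x4 \<and> x3 \<noteq> x5 \<and> x4 \<noteq> x5)) \<and> (E x0 x1) \<and> (\<not> (E x0 x2)) \<and> (\<not> (E x0 x3)) \<and> (\<not> (E x0 x4)) \<and> (E x0 x5) \<and> (E x1 x2) \<and> (\<not> (E x1 x3)) \<and> (\<not> (E x1 x4)) \<and> (\<not> (E x1 x5)) \<and> (E x2 x3) \<and> (\<not> (E x2 x4)) \<and> (\<not> (E x2 x5)) \<and> (E x3 x4) \<and> (\<not> (E x3 x5)) \<and> (E x4 x5)))"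
proof
  assume H: "(((x0 \<noteq> x1 \<and> x0 \<noteq> x2 \<and> x0 \<noteq> x3 \<and> x0 \<noteq> x4 \<and> x0 \<noteq> x5 \<and> x1 \<noteq> x2 \<and> x1 \<noteq> x3 \<and> x1 \<noteq> x4 \<and> x1 \<noteq> x5 \<and> x2 \<noteq> x3 \<and> x2 \<noteq> x4 \<and> x2 \<noteq> x5 \<and> x3 \<noteq> x4 \<and> x3 \<noteq> x5 \<and> x4 \<noteq> x5)) \<and> (E x0 x1) \<and> (\<not> (E x0 x2)) \<and> (\<not> (E x0 x3)) \<and> (\<not> (E x0 x4)) \<and> (E x0 x5) \<and> (E x1 x2) \<and> (\<not> (E x1 x3)) \<and> (\<not> (E x1 x4)) \<and> (\<not> (E x1 x5)) \<and> (E x2 x3) \<and> (\<not> (E x2 x4)) \<and> (\<not> (E x2 x5)) \<and> (E x3 x4) \<and> (\<not> (E x3 x5)) \<and> (E x4 x5))"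
  have "induced_sub (cyc_V 6) (cyc_E 6) V E"
  proof (rule induced_by_list[of "[x0,x1,x2,x3,x4,x5]"])
    show "set [x0,x1,x2,x3,x4,x5] \<subseteq> V" using assms by auto
    show "distinct [x0,x1,x2,x3,x4,x5]" using H by simp
    show "cyc_V 6 = {0..<length [x0,x1,x2,x3,x4,x5]}" by (auto simp: cyc_V_def)
    fix x y assume "x < length [x0,x1,x2,x3,x4,x5]" "y < length [x0,x1,x2,x3,x4,x5]"
    then have "x = 0 \<or> x = 1 \<or> x = 2 \<or> x = 3 \<or> x = 4 \<or> x = 5" "y = 0 \<or> y = 1 \<or> y = 2 \<or> y = 3 \<or> y = 4 \<or> y = 5" by auto
    then show "cyc_E 6 x y = E ([x0,x1,x2,x3,x4,x5]!x) ([x0,x1,x2,x3,x4,x5]!y)" using H by (elim disjE; simp add: cyc_E_def irr Esym)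
  qed
  with fC6 show False by (simp add: free_of_def)
qed

lemma noC7:
  assumes "x0 \<in> V" "x1 \<in> V" "x2 \<in> V" "x3 \<in> V" "x4 \<in> V" "x5 \<in> V" "x6 \<in> V"
  shows "\<not> ((((x0 \<noteq> x1 \<and> x0 \<noteq> x2 \<and> x0 \<noteq> x3 \<and> x0 \<noteq> x4 \<and> x0 \<noteq> x5 \<and> x0 \<noteq> x6 \<and> x1 \<noteq> x2 \<and> x1 \<noteq> x3 \<and> x1 \<noteq> x4 \<and> x1 \<noteq> x5 \<and> x1 \<noteq> x6 \<and> x2 \<noteq> x3 \<and> x2 \<noteq> x4 \<and> x2 \<noteq> x5 \<and> x2 \<noteq> x6 \<and> x3 \<noteq> x4 \<and> x3 \<noteq> x5 \<and> x3 \<noteq> x6 \<and> x4 \<noteq> x5 \<and> x4 \<noteq> x6 \<and> x5 \<noteq> x6)) \<and> (E x0 x1) \<and> (\<not> (E x0 x2)) \<and> (\<not> (E x0 x3)) \<and> (\<not> (E x0 x4)) \<and> (\<not> (E x0 x5)) \<and> (E x0 x6) \<and> (E x1 x2) \<and> (\<not> (E x1 x3)) \<and> (\<not> (E x1 x4)) \<and> (\<not> (E x1 x5)) \<and> (\<not> (E x1 x6)) \<and> (E x2 x3) \<and> (\<not> (E x2 x4)) \<and> (\<not> (E x2 x5)) \<and> (\<not> (E x2 x6)) \<and> (E x3 x4) \<and> (\<not> (E x3 x5)) \<and> (\<not> (E x3 x6)) \<and> (E x4 x5) \<and> (\<not> (E x4 x6)) \<and> (E x5 x6)))"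
proof
  assume H: "(((x0 \<noteq> x1 \<and> x0 \<noteq> x2 \<and> x0 \<noteq> x3 \<and> x0 \<noteq> x4 \<and> x0 \<noteq> x5 \<and> x0 \<noteq> x6 \<and> x1 \<noteq> x2 \<and> x1 \<noteq> x3 \<and> x1 \<noteq> x4 \<and> x1 \<noteq> x5 \<and> x1 \<noteq> x6 \<and> x2 \<noteq> x3 \<and> x2 \<noteq> x4 \<and> x2 \<noteq> x5 \<and> x2 \<noteq> x6 \<and> x3 \<noteq> x4 \<and> x3 \<noteq> x5 \<and> x3 \<noteq> x6 \<and> x4 \<noteq> x5 \<and> x4 \<noteq> x6 \<and> x5 \<noteq> x6)) \<and> (E x0 x1) \<and> (\<not> (E x0 x2)) \<and> (\<not> (E x0 x3)) \<and> (\<not> (E x0 x4)) \<and> (\<not> (E x0 x5)) \<and> (E x0 x6) \<and> (E x1 x2) \<and> (\<not> (E x1 x3)) \<and> (\<not> (E x1 x4)) \<and> (\<not> (E x1 x5)) \<and> (\<not> (E x1 x6)) \<and> (E x2 x3) \<and> (\<not> (E x2 x4)) \<and> (\<not> (E x2 x5)) \<and> (\<not> (E x2 x6)) \<and> (E x3 x4) \<and> (\<not> (E x3 x5)) \<and> (\<not> (E x3 x6)) \<and> (E x4 x5) \<and> (\<not> (E x4 x6)) \<and> (E x5 x6))"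
  have "induced_sub (cyc_V 7) (cyc_E 7) V E"
  proof (rule induced_by_list[of "[x0,x1,x2,x3,x4,x5,x6]"])
    show "set [x0,x1,x2,x3,x4,x5,x6] \<subseteq> V" using assms by auto
    show "distinct [x0,x1,x2,x3,x4,x5,x6]" using H by simp
    show "cyc_V 7 = {0..<length [x0,x1,x2,x3,x4,x5,x6]}" by (auto simp: cyc_V_def)
    fix x y assume "x < length [x0,x1,x2,x3,x4,x5,x6]" "y < length [x0,x1,x2,x3,x4,x5,x6]"
    then have "x = 0 \<or> x = 1 \<or> x = 2 \<or> x = 3 \<or> x = 4 \<or> x = 5 \<or> x = 6" "y = 0 \<or> y = 1 \<or> y = 2 \<or> y = 3 \<or> y = 4 \<or> y = 5 \<or> y = 6" by auto
    then show "cyc_E 7 x y = E ([x0,x1,x2,x3,x4,x5,x6]!x) ([x0,x1,x2,x3,x4,x5,x6]!y)" using H by (elim disjE; simp add: cyc_E_def irr Esym)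
  qed
  with fC7 show False by (simp add: free_of_def)
qed

lemma no2P3:
  assumes "x0 \<in> V" "x1 \<in> V" "x2 \<in> V" "x3 \<in> V" "x4 \<in> V" "x5 \<in> V"
  shows "\<not> ((((x0 \<noteq> x1 \<and> x0 \<noteq> x2 \<and> x0 \<noteq> x3 \<and> x0 \<noteq> x4 \<and> x0 \<noteq> x5 \<and> x1 \<noteq> x2 \<and> x1 \<noteq> x3 \<and> x1 \<noteq> x4 \<and> x1 \<noteq> x5 \<and> x2 \<noteq> x3 \<and> x2 \<noteq> x4 \<and> x2 \<noteq> x5 \<and> x3 \<noteq> x4 \<and> x3 \<noteq> x5 \<and> x4 \<noteq> x5)) \<and> (E x0 x1) \<and> (\<not> (E x0 x2)) \<and> (\<not> (E x0 x3)) \<and> (\<not> (E x0 x4)) \<and> (\<not> (E x0 x5)) \<and> (E x1 x2) \<and> (\<not> (E x1 x3)) \<and> (\<not> (E x1 x4)) \<and> (\<not> (E x1 x5)) \<and> (\<not> (E x2 x3)) \<and> (\<not> (E x2 x4)) \<and> (\<not> (E x2 x5)) \<and> (E x3 x4) \<and> (\<not> (E x3 x5)) \<and> (E x4 x5)))"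
proof
  assume H: "(((x0 \<noteq> x1 \<and> x0 \<noteq> x2 \<and> x0 \<noteq> x3 \<and> x0 \<noteq> x4 \<and> x0 \<noteq> x5 \<and> x1 \<noteq> x2 \<and> x1 \<noteq> x3 \<and> x1 \<noteq> x4 \<and> x1 \<noteq> x5 \<and> x2 \<noteq> x3 \<and> x2 \<noteq> x4 \<and> x2 \<noteq> x5 \<and> x3 \<noteq> x4 \<and> x3 \<noteq> x5 \<and> x4 \<noteq> x5)) \<and> (E x0 x1) \<and> (\<not> (E x0 x2)) \<and> (\<not> (E x0 x3)) \<and> (\<not> (E x0 x4)) \<and> (\<not> (E x0 x5)) \<and> (E x1 x2) \<and> (\<not> (E x1 x3)) \<and> (\<not> (E x1 x4)) \<and> (\<not> (E x1 x5)) \<and> (\<not> (E x2 x3)) \<and> (\<not> (E x2 x4)) \<and> (\<not> (E x2 x5)) \<and> (E x3 x4) \<and> (\<not> (E x3 x5)) \<and> (E x4 x5))"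
  have "induced_sub (twoP3_V) (twoP3_E) V E"
  proof (rule induced_by_list[of "[x0,x1,x2,x3,x4,x5]"])
    show "set [x0,x1,x2,x3,x4,x5] \<subseteq> V" using assms by auto
    show "distinct [x0,x1,x2,x3,x4,x5]" using H by simp
    show "twoP3_V = {0..<length [x0,x1,x2,x3,x4,x5]}" by (auto simp: twoP3_V_def)
    fix x y assume "x < length [x0,x1,x2,x3,x4,x5]" "y < length [x0,x1,x2,x3,x4,x5]"
    then have "x = 0 \<or> x = 1 \<or> x = 2 \<or> x = 3 \<or> x = 4 \<or> x = 5" "y = 0 \<or> y = 1 \<or> y = 2 \<or> y = 3 \<or> y = 4 \<or> y = 5" by auto
    then show "twoP3_E x y = E ([x0,x1,x2,x3,x4,x5]!x) ([x0,x1,x2,x3,x4,x5]!y)" using H by (elim disjE; simp add: twoP3_E_def symrel_def irr Esym)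
  qed
  with f2P3 show False by (simp add: free_of_def)
qed

lemma noT0:
  assumes "x0 \<in> V" "x1 \<in> V" "x2 \<in> V" "x3 \<in> V" "x4 \<in> V" "x5 \<in> V" "x6 \<in> V" "x7 \<in> V" "x8 \<in> V"
  shows "\<not> ((((x0 \<noteq> x1 \<and> x0 \<noteq> x2 \<and> x0 \<noteq> x3 \<and> x0 \<noteq> x4 \<and> x0 \<noteq> x5 \<and> x0 \<noteq> x6 \<and> x0 \<noteq> x7 \<and> x0 \<noteq> x8 \<and> x1 \<noteq> x2 \<and> x1 \<noteq> x3 \<and> x1 \<noteq> x4 \<and> x1 \<noteq> x5 \<and> x1 \<noteq> x6 \<and> x1 \<noteq> x7 \<and> x1 \<noteq> x8 \<and> x2 \<noteq> x3 \<and> x2 \<noteq> x4 \<and> x2 \<noteq> x5 \<and> x2 \<noteq> x6 \<and> x2 \<noteq> x7 \<and> x2 \<noteq> x8 \<and> x3 \<noteq> x4 \<and> x3 \<noteq> x5 \<and> x3 \<noteq> x6 \<and> x3 \<noteq> x7 \<and> x3 \<noteq> x8 \<and> x4 \<noteq> x5 \<and> x4 \<noteq> x6 \<and> x4 \<noteq> x7 \<and> x4 \<noteq> x8 \<and> x5 \<noteq> x6 \<and> x5 \<noteq> x7 \<and> x5 \<noteq> x8 \<and> x6 \<noteq> x7 \<and> x6 \<noteq> x8 \<and> x7 \<noteq> x8)) \<and> (E x0 x1) \<and> (E x0 x2) \<and> (\<not> (E x0 x3)) \<and> (E x0 x4) \<and> (E x0 x5) \<and> (\<not> (E x0 x6))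 \<and> (\<not> (E x0 x7)) \<and> (\<not> (E x0 x8)) \<and> (\<not> (E x1 x2)) \<and> (E x1 x3) \<and> (E x1 x4) \<and> (E x1 x5) \<and> (\<not> (E x1 x6)) \<and> (\<not> (E x1 x7)) \<and> (\<not> (E x1 x8)) \<and> (\<not> (E x2 x3)) \<and> (\<not> (E x2 x4)) \<and> (\<not> (E x2 x5)) \<and> (E x2 x6) \<and> (\<not> (E x2 x7)) \<and> (\<not> (E x2 x8)) \<and> (\<not> (E x3 x4)) \<and> (\<not> (E x3 x5)) \<and> (E x3 x6) \<and> (\<not> (E x3 x7)) \<and> (\<not> (E x3 x8)) \<and> (\<not> (E x4 x5)) \<and> (\<not> (E x4 x6)) \<and> (E x4 x7) \<and> (\<not> (E x4 x8)) \<and> (\<not> (E x5 x6)) \<and> (\<not> (E x5 x7)) \<and> (E x5 x8) \<and> (E x6 x7) \<and> (E x6 x8) \<and> (E x7 x8)))"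
proof
  assume H: "(((x0 \<noteq> x1 \<and> x0 \<noteq> x2 \<and> x0 \<noteq> x3 \<and> x0 \<noteq> x4 \<and> x0 \<noteq> x5 \<and> x0 \<noteq> x6 \<and> x0 \<noteq> x7 \<and> x0 \<noteq> x8 \<and> x1 \<noteq> x2 \<and> x1 \<noteq> x3 \<and> x1 \<noteq> x4 \<and> x1 \<noteq> x5 \<and> x1 \<noteq> x6 \<and> x1 \<noteq> x7 \<and> x1 \<noteq> x8 \<and> x2 \<noteq> x3 \<and> x2 \<noteq> x4 \<and> x2 \<noteq> x5 \<and> x2 \<noteq> x6 \<and> x2 \<noteq> x7 \<and> x2 \<noteq> x8 \<and> x3 \<noteq> x4 \<and> x3 \<noteq> x5 \<and> x3 \<noteq> x6 \<and> x3 \<noteq> x7 \<and> x3 \<noteq> x8 \<and> x4 \<noteq> x5 \<and> x4 \<noteq> x6 \<and> x4 \<noteq> x7 \<and> x4 \<noteq> x8 \<and> x5 \<noteq> x6 \<and> x5 \<noteq> x7 \<and> x5 \<noteq> x8 \<and> x6 \<noteq> x7 \<and> x6 \<noteq> x8 \<and> x7 \<noteq> x8)) \<and> (E x0 x1) \<and> (E x0 x2) \<and> (\<not> (E x0 x3)) \<and> (E x0 x4) \<and> (E x0 x5) \<and> (\<not> (E x0 x6)) \<and> (\<not> (E x0 x7)) \<and> (\<not> (E x0 x8)) \<and> (\<not> (E x1 x2)) \<and> (E x1 x3) \<and> (E x1 x4) \<and> (E x1 x5) \<and> (\<not> (E x1 x6)) \<and> (\<not> (E x1 x7)) \<and> (\<not>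 (E x1 x8)) \<and> (\<not> (E x2 x3)) \<and> (\<not> (E x2 x4)) \<and> (\<not> (E x2 x5)) \<and> (E x2 x6) \<and> (\<not> (E x2 x7)) \<and> (\<not> (E x2 x8)) \<and> (\<not> (E x3 x4)) \<and> (\<not> (E x3 x5)) \<and> (E x3 x6) \<and> (\<not> (E x3 x7)) \<and> (\<not> (E x3 x8)) \<and> (\<not> (E x4 x5)) \<and> (\<not> (E x4 x6)) \<and> (E x4 x7) \<and> (\<not> (E x4 x8)) \<and> (\<not> (E x5 x6)) \<and> (\<not> (E x5 x7)) \<and> (E x5 x8) \<and> (E x6 x7) \<and> (E x6 x8) \<and> (E x7 x8))"
  have "induced_sub (T0_V) (T0_E) V E"
  proof (rule induced_by_list[of "[x0,x1,x2,x3,x4,x5,x6,x7,x8]"])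
    show "set [x0,x1,x2,x3,x4,x5,x6,x7,x8] \<subseteq> V" using assms by auto
    show "distinct [x0,x1,x2,x3,x4,x5,x6,x7,x8]" using H by simp
    show "T0_V = {0..<length [x0,x1,x2,x3,x4,x5,x6,x7,x8]}" by (auto simp: T0_V_def)
    fix x y assume "x < length [x0,x1,x2,x3,x4,x5,x6,x7,x8]" "y < length [x0,x1,x2,x3,x4,x5,x6,x7,x8]"
    then have "x = 0 \<or> x = 1 \<or> x = 2 \<or> x = 3 \<or> x = 4 \<or> x = 5 \<or> x = 6 \<or> x = 7 \<or> x = 8" "y = 0 \<or> y = 1 \<or> y = 2 \<or> y = 3 \<or> y = 4 \<or> y = 5 \<or> y = 6 \<or> y = 7 \<or> y = 8" by auto
    then show "T0_E x y = E ([x0,x1,x2,x3,x4,x5,x6,x7,x8]!x) ([x0,x1,x2,x3,x4,x5,x6,x7,x8]!y)" using H by (elim disjE; simp add: T0_E_def symrel_def irr Esym)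
  qed
  with fT0 show False by (simp add: free_of_def)
qed
lemma L1_raw:
  assumes ix0: "i0 \<in> {1..t}"
    and m0: "v0 \<in> C i0"
    and m1: "v1 \<in> C i0"
    and F0: "(v0 \<noteq> v1)"
    and F1: "\<not> (E v0 v1)"
  shows False
proof -
  obtain v2 where m2: "v2 \<in> B i0" and F2: "E v0 v2" using w_nB[OF m0 ix0] by blast
  obtain v3 where m3: "v3 \<in> B i0" and F3: "E v1 v3" using w_nB[OF m1 ix0] by blast
  obtain v4 where m4: "v4 \<in> A" and F4: "E v2 v4" using w_nA[OF m2 ix0] by blast
  obtain v5 where m5: "v5 \<in> A" and F5: "E v3 v5" using w_nA[OF m3 ix0] by blast
  obtain i1 i2 v6 v7 where ix1: "i1 \<in> {1..t}" and ix2: "i2 \<in> {1..t}" and m6: "v6 \<in> B i1" and m7: "v7 \<in> B i2" and F6: "((i1 \<noteq> i2) \<and> (E v4 v6) \<and> (E v4 v7))" using w_two[OF m4] by blast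
  obtain v10 where m10: "v10 \<in> C i1" and F8: "E v6 v10" using w_nC[OF m6 ix1] by blast
  obtain v11 where m11: "v11 \<in> C i2" and F9: "E v7 v11" using w_nC[OF m7 ix2] by blast
  obtain i5 where ix5: "i5 \<in> {1..t}" and F10: "((i0 \<noteq> i1) \<longrightarrow> (((i5 \<noteq> i0) \<and> (i5 \<noteq> i1))))" using w_third[of i0 i1] by blast
  obtain i8 where ix8: "i8 \<in> {1..t}" and F15: "((i0 \<noteq> i2) \<longrightarrow> (((i8 \<noteq> i0) \<and> (i8 \<noteq> i2))))" using w_third[of i0 i2] by blast
  obtain v12 where m12: "v12 \<in> B i5" using w_BOf[OF ix5] by blast
  obtain v21 where m21: "v21 \<in> B i8" using w_BOf[OF ix8] by blast
  obtain v15 where m15: "v15 \<in> C i5" and F12: "E v12 v15" using w_nC[OF m12 ix5] by blast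
  obtain v24 where m24: "v24 \<in> C i8" and F19: "E v21 v24" using w_nC[OF m21 ix8] by blast
  have vV0: "v0 \<in> V" using ix0 m0 by (rule memV_C)
  have vV1: "v1 \<in> V" using ix0 m1 by (rule memV_C)
  have vV2: "v2 \<in> V" using ix0 m2 by (rule memV_B)
  have vV3: "v3 \<in> V" using ix0 m3 by (rule memV_B)
  have vV4: "v4 \<in> V" using m4 by (rule memV_A)
  have vV5: "v5 \<in> V" using m5 by (rule memV_A)
  have vV6: "v6 \<in> V" using ix1 m6 by (rule memV_B)
  have vV7: "v7 \<in> V" using ix2 m7 by (rule memV_B)
  have vV10: "v10 \<in> V" using ix1 m10 by (rule memV_C)
  have vV11: "v11 \<in> V" using ix2 m11 by (rule memV_C)
  have vV12: "v12 \<in> V" using ix5 m12 by (rule memV_B)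
  have vV15: "v15 \<in> V" using ix5 m15 by (rule memV_C)
  have vV21: "v21 \<in> V" using ix8 m21 by (rule memV_B)
  have vV24: "v24 \<in> V" using ix8 m24 by (rule memV_C)
  show False
    by (smt (z3) F0
      F1
      F10
      F12
      F15
      F19
      F2
      F3
      F4
      F5
      F6
      F8
      F9
      no2P3[OF vV0 vV2 vV4 vV1 vV3 vV5]
      noC6[OF vV4 vV2 vV0 vV11 vV1 vV3]
      noC4[OF vV0 vV3 vV1 vV10]
      noC4[OF vV0 vV2 vV1 vV11]
      noC4[OF vV1 vV2 vV0 vV11]
      noC6[OF vV0 vV2 vV5 vV3 vV1 vV10]
      noC6[OF vV1 vV10 vV6 vV4 vV2 vV3]
      noC7[OF vV10 vV0 vV2 vV4 vV5 vV3 vV1]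
      noC4[OF vV0 vV2 vV1 vV10]
      noC4[OF vV1 vV2 vV0 vV10]
      no2P3[OF vV1 vV24 vV21 vV2 vV4 vV7]
      noT0[OF vV24 vV11 vV21 vV7 vV0 vV1 vV4 vV2 vV3]
      noC7[OF vV11 vV0 vV2 vV4 vV5 vV3 vV1]
      noC4[OF vV0 vV3 vV1 vV11]
      no2P3[OF vV2 vV4 vV6 vV1 vV15 vV12]
      noT0[OF vV15 vV10 vV12 vV6 vV0 vV1 vV4 vV2 vV3]
      noC6[OF vV0 vV2 vV5 vV3 vV1 vV11]
      noC6[OF vV1 vV10 vV0 vV2 vV4 vV3]
      noC6[OF vV2 vV4 vV7 vV11 vV1 vV3]
      adj_CC[OF m0 m10 ix0 ix1]
      adj_CC[OF m0 m11 ix0 ix2]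
      adj_CB[OF m0 m12 ix0 ix5]
      adj_CC[OF m0 m15 ix0 ix5]
      adj_CB[OF m0 m21 ix0 ix8]
      adj_CC[OF m0 m24 ix0 ix8]
      adj_CA[OF m0 m4 ix0]
      adj_CA[OF m0 m5 ix0]
      adj_CB[OF m0 m6 ix0 ix1]
      adj_CB[OF m0 m7 ix0 ix2]
      adj_CB[OF m10 m12 ix1 ix5]
      adj_CC[OF m10 m15 ix1 ix5]
      adj_CB[OF m11 m21 ix2 ix8]
      adj_CC[OF m11 m24 ix2 ix8]
      adj_CC[OF m1 m10 ix0 ix1]
      adj_CC[OF m1 m11 ix0 ix2]
      adj_CB[OF m1 m12 ix0 ix5]
      adj_CC[OF m1 m15 ix0 ix5]
      adj_CB[OF m1 m21 ix0 ix8]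
      adj_CC[OF m1 m24 ix0 ix8]
      adj_CA[OF m1 m4 ix0]
      adj_CA[OF m1 m5 ix0]
      adj_CB[OF m1 m6 ix0 ix1]
      adj_CB[OF m1 m7 ix0 ix2]
      adj_BC[OF m2 m10 ix0 ix1]
      adj_BC[OF m2 m11 ix0 ix2]
      adj_BB[OF m2 m12 ix0 ix5]
      adj_BC[OF m2 m15 ix0 ix5]
      adj_BB[OF m2 m21 ix0 ix8]
      adj_BC[OF m2 m24 ix0 ix8]
      adj_BB[OF m2 m6 ix0 ix1]
      adj_BB[OF m2 m7 ix0 ix2]
      adj_BC[OF m3 m10 ix0 ix1]
      adj_BC[OF m3 m11 ix0 ix2]
      adj_BB[OF m3 m12 ix0 ix5]
      adj_BC[OF m3 m15 ix0 ix5]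
      adj_BB[OF m3 m21 ix0 ix8]
      adj_BC[OF m3 m24 ix0 ix8]
      adj_BB[OF m3 m6 ix0 ix1]
      adj_BB[OF m3 m7 ix0 ix2]
      adj_AC[OF m4 m10 ix1]
      adj_AC[OF m4 m11 ix2]
      adj_AC[OF m4 m15 ix5]
      adj_AC[OF m4 m24 ix8]
      adj_AC[OF m5 m10 ix1]
      adj_AC[OF m5 m11 ix2]
      adj_BB[OF m6 m12 ix1 ix5]
      adj_BC[OF m6 m15 ix1 ix5]
      adj_BB[OF m7 m21 ix2 ix8]
      adj_BC[OF m7 m24 ix2 ix8]
      kd_CC[OF m0 m10 ix0 ix1]
      kd_CC[OF m0 m11 ix0 ix2]
      kd_CB[OF m0 m12 ix0 ix5]
      kd_CC[OF m0 m15 ix0 ix5]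
      kd_CB[OF m0 m2 ix0 ix0]
      kd_CB[OF m0 m21 ix0 ix8]
      kd_CC[OF m0 m24 ix0 ix8]
      kd_CB[OF m0 m3 ix0 ix0]
      kd_CA[OF m0 m4 ix0]
      kd_CA[OF m0 m5 ix0]
      kd_CB[OF m0 m6 ix0 ix1]
      kd_CB[OF m0 m7 ix0 ix2]
      kd_CB[OF m10 m12 ix1 ix5]
      kd_CC[OF m10 m15 ix1 ix5]
      kd_CB[OF m11 m21 ix2 ix8]
      kd_CC[OF m11 m24 ix2 ix8]
      kd_BC[OF m12 m15 ix5 ix5]
      kd_CC[OF m1 m10 ix0 ix1]
      kd_CC[OF m1 m11 ix0 ix2]
      kd_CB[OF m1 m12 ix0 ix5]
      kd_CC[OF m1 m15 ix0 ix5]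
      kd_CB[OF m1 m2 ix0 ix0]
      kd_CB[OF m1 m21 ix0 ix8]
      kd_CC[OF m1 m24 ix0 ix8]
      kd_CB[OF m1 m3 ix0 ix0]
      kd_CA[OF m1 m4 ix0]
      kd_CA[OF m1 m5 ix0]
      kd_CB[OF m1 m6 ix0 ix1]
      kd_CB[OF m1 m7 ix0 ix2]
      kd_BC[OF m21 m24 ix8 ix8]
      kd_BC[OF m2 m10 ix0 ix1]
      kd_BC[OF m2 m11 ix0 ix2]
      kd_BB[OF m2 m12 ix0 ix5]
      kd_BC[OF m2 m15 ix0 ix5]
      kd_BB[OF m2 m21 ix0 ix8]
      kd_BC[OF m2 m24 ix0 ix8]
      kd_BA[OF m2 m4 ix0]
      kd_BA[OF m2 m5 ix0]
      kd_BB[OF m2 m6 ix0 ix1]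
      kd_BB[OF m2 m7 ix0 ix2]
      kd_BC[OF m3 m10 ix0 ix1]
      kd_BC[OF m3 m11 ix0 ix2]
      kd_BB[OF m3 m12 ix0 ix5]
      kd_BC[OF m3 m15 ix0 ix5]
      kd_BB[OF m3 m21 ix0 ix8]
      kd_BC[OF m3 m24 ix0 ix8]
      kd_BA[OF m3 m4 ix0]
      kd_BA[OF m3 m5 ix0]
      kd_BB[OF m3 m6 ix0 ix1]
      kd_BB[OF m3 m7 ix0 ix2]
      kd_AC[OF m4 m10 ix1]
      kd_AC[OF m4 m11 ix2]
      kd_AB[OF m4 m12 ix5]
      kd_AC[OF m4 m15 ix5]
      kd_AB[OF m4 m21 ix8]
      kd_AC[OF m4 m24 ix8]
      kd_AB[OF m4 m6 ix1]
      kd_AB[OF m4 m7 ix2]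
      kd_AC[OF m5 m10 ix1]
      kd_AC[OF m5 m11 ix2]
      kd_BC[OF m6 m10 ix1 ix1]
      kd_BB[OF m6 m12 ix1 ix5]
      kd_BC[OF m6 m15 ix1 ix5]
      kd_BC[OF m7 m11 ix2 ix2]
      kd_BB[OF m7 m21 ix2 ix8]
      kd_BC[OF m7 m24 ix2 ix8]
      Esym[of v0 v1]
      Esym[of v0 v10]
      Esym[of v0 v11]
      Esym[of v0 v12]
      Esym[of v0 v15]
      Esym[of v0 v2]
      Esym[of v0 v21]
      Esym[of v0 v24]
      Esym[of v0 v4]
      Esym[of v0 v6]
      Esym[of v0 v7]
      Esym[of v10 v15]
      Esym[of v11 v24]
      Esym[of v12 v15]
      Esym[of v1 v10]
      Esym[of v1 v11]
      Esym[of v1 v12]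
      Esym[of v1 v15]
      Esym[of v1 v21]
      Esym[of v1 v24]
      Esym[of v1 v3]
      Esym[of v1 v4]
      Esym[of v1 v5]
      Esym[of v1 v6]
      Esym[of v1 v7]
      Esym[of v21 v24]
      Esym[of v2 v10]
      Esym[of v2 v11]
      Esym[of v2 v12]
      Esym[of v2 v15]
      Esym[of v2 v21]
      Esym[of v2 v24]
      Esym[of v2 v4]
      Esym[of v2 v6]
      Esym[of v2 v7]
      Esym[of v3 v10]
      Esym[of v3 v11]
      Esym[of v3 v12]
      Esym[of v3 v15]
      Esym[of v3 v21]
      Esym[of v3 v24]
      Esym[of v3 v5]
      Esym[of v3 v6]
      Esym[of v3 v7]
      Esym[of v4 v10]
      Esym[of v4 v11]
      Esym[of v4 v12]
      Esym[of v4 v15]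
      Esym[of v4 v24]
      Esym[of v4 v6]
      Esym[of v4 v7]
      Esym[of v5 v10]
      Esym[of v5 v11]
      Esym[of v6 v10]
      Esym[of v6 v12]
      Esym[of v6 v15]
      Esym[of v7 v11]
      Esym[of v7 v21]
      Esym[of v7 v24])
qed

lemma C_clique: "i \<in> {1..t} \<Longrightarrow> u \<in> C i \<Longrightarrow> v \<in> C i \<Longrightarrow> u \<noteq> v \<Longrightarrow> E u v"
  using L1_raw by blast
lemma cl_CC: "u \<in> C i \<Longrightarrow> v \<in> C j \<Longrightarrow> i \<in> {1..t} \<Longrightarrow> j \<in> {1..t} \<Longrightarrow> i = j \<longrightarrow> u \<noteq> v \<longrightarrow> E u v"
  using C_clique by blast

lemma L2a_raw:
  assumes ix0: "i0 \<in> {1..t}"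
    and ix1: "i1 \<in> {1..t}"
    and m0: "v0 \<in> A"
    and m1: "v1 \<in> B i0"
    and m2: "v2 \<in> B i0"
    and m3: "v3 \<in> C i0"
    and m4: "v4 \<in> C i0"
    and F0: "((i0 \<noteq> i1) \<and> ((v1 \<noteq> v2)) \<and> (\<not> (E v1 v2)) \<and> (E v0 v1) \<and> (E v0 v2) \<and> (E v1 v3) \<and> (E v2 v4) \<and> (\<not> (E v1 v4)) \<and> (\<not> (E v2 v3)))"
    and U: "\<And>x k. k \<in> {1..t} \<Longrightarrow> x \<in> B k \<Longrightarrow> k = i1 \<longrightarrow> \<not> E v0 x"
  shows False
proof -
  obtain i2 i3 v5 v6 where ix2: "i2 \<in> {1..t}" and ix3: "i3 \<in> {1..t}" and m5: "v5 \<in> B i2" and m6: "v6 \<in> B i3" and F1: "((i2 \<noteq> i3) \<and> (E v0 v5) \<and> (E v0 v6))" using w_two[OF m0] by blast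
  obtain v7 where m7: "v7 \<in> C i2" and F2: "E v5 v7" using w_nC[OF m5 ix2] by blast
  obtain v8 where m8: "v8 \<in> C i3" and F3: "E v6 v8" using w_nC[OF m6 ix3] by blast
  obtain v10 where m10: "v10 \<in> C i1" using w_COf[OF ix1] by blast
  obtain v13 where m13: "v13 \<in> B i1" and F6: "E v10 v13" using w_nB[OF m10 ix1] by blast
  have vV0: "v0 \<in> V" using m0 by (rule memV_A)
  have vV1: "v1 \<in> V" using ix0 m1 by (rule memV_B)
  have vV2: "v2 \<in> V" using ix0 m2 by (rule memV_B)
  have vV3: "v3 \<in> V" using ix0 m3 by (rule memV_C)
  have vV4: "v4 \<in> V" using ix0 m4 by (rule memV_C)
  have vV5: "v5 \<in> V" using ix2 m5 by (rule memV_B)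
  have vV6: "v6 \<in> V" using ix3 m6 by (rule memV_B)
  have vV7: "v7 \<in> V" using ix2 m7 by (rule memV_C)
  have vV8: "v8 \<in> V" using ix3 m8 by (rule memV_C)
  have vV10: "v10 \<in> V" using ix1 m10 by (rule memV_C)
  have vV13: "v13 \<in> V" using ix1 m13 by (rule memV_B)
  show False
    by (smt (z3) F0
      F1
      F6
      no2P3[OF vV1 vV0 vV2 vV7 vV10 vV13]
      no2P3[OF vV1 vV0 vV2 vV8 vV10 vV13]
      adj_AC[OF m0 m10 ix1]
      adj_AC[OF m0 m7 ix2]
      adj_AC[OF m0 m8 ix3]
      adj_BC[OF m1 m10 ix0 ix1]
      adj_BB[OF m1 m13 ix0 ix1]
      adj_BC[OF m1 m7 ix0 ix2]
      adj_BC[OF m1 m8 ix0 ix3]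
      adj_BC[OF m2 m10 ix0 ix1]
      adj_BB[OF m2 m13 ix0 ix1]
      adj_BC[OF m2 m7 ix0 ix2]
      adj_BC[OF m2 m8 ix0 ix3]
      adj_CC[OF m7 m10 ix2 ix1]
      adj_CB[OF m7 m13 ix2 ix1]
      adj_CC[OF m8 m10 ix3 ix1]
      adj_CB[OF m8 m13 ix3 ix1]
      kd_AB[OF m0 m1 ix0]
      kd_AC[OF m0 m10 ix1]
      kd_AB[OF m0 m13 ix1]
      kd_AB[OF m0 m2 ix0]
      kd_AC[OF m0 m7 ix2]
      kd_AC[OF m0 m8 ix3]
      kd_CB[OF m10 m13 ix1 ix1]
      kd_BC[OF m1 m10 ix0 ix1]
      kd_BB[OF m1 m13 ix0 ix1]
      kd_BC[OF m1 m7 ix0 ix2]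
      kd_BC[OF m1 m8 ix0 ix3]
      kd_BC[OF m2 m10 ix0 ix1]
      kd_BB[OF m2 m13 ix0 ix1]
      kd_BC[OF m2 m7 ix0 ix2]
      kd_BC[OF m2 m8 ix0 ix3]
      kd_CC[OF m7 m10 ix2 ix1]
      kd_CB[OF m7 m13 ix2 ix1]
      kd_CC[OF m8 m10 ix3 ix1]
      kd_CB[OF m8 m13 ix3 ix1]
      Esym[of v0 v1]
      U[OF ix1 m13]
      U[OF ix2 m5]
      U[OF ix3 m6])
qed

lemma pentE: "pent_E s x y \<longleftrightarrow> (x = 0 \<and> 1 \<le> y \<and> y \<le> s) \<or> (y = 0 \<and> 1 \<le> x \<and> x \<le> s)
   \<or> (1 \<le> x \<and> x \<le> s \<and> y = s + x) \<or> (1 \<le> y \<and> y \<le> s \<and> x = s + y)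
   \<or> (s < x \<and> x \<le> 2*s \<and> s < y \<and> y \<le> 2*s \<and> x \<noteq> y)"
proof -
  have 1: "(x,y) \<in> {(s + i, s + j) | i j. 1 \<le> i \<and> i \<le> s \<and> 1 \<le> j \<and> j \<le> s \<and> i \<noteq> j}
     \<longleftrightarrow> (s < x \<and> x \<le> 2*s \<and> s < y \<and> y \<le> 2*s \<and> x \<noteq> y)"
  proof
    assume "(x,y) \<in> {(s + i, s + j) | i j. 1 \<le> i \<and> i \<le> s \<and> 1 \<le> j \<and> j \<le> s \<and> i \<noteq> j}"
    then show "s < x \<and> x \<le> 2*s \<and> s < y \<and> y \<le> 2*s \<and> x \<noteq> y" by auto
  next
    assume H: "s < x \<and> x \<le> 2*s \<and> s < y \<and> y \<le> 2*s \<and> x \<noteq> y"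
    then have "x = s + (x - s) \<and> y = s + (y - s) \<and> 1 \<le> x - s \<and> x - s \<le> s \<and> 1 \<le> y - s \<and> y - s \<le> s \<and> x - s \<noteq> y - s" by auto
    then show "(x,y) \<in> {(s + i, s + j) | i j. 1 \<le> i \<and> i \<le> s \<and> 1 \<le> j \<and> j \<le> s \<and> i \<noteq> j}" by blast
  qed
  have 2: "(y,x) \<in> {(s + i, s + j) | i j. 1 \<le> i \<and> i \<le> s \<and> 1 \<le> j \<and> j \<le> s \<and> i \<noteq> j}
     \<longleftrightarrow> (s < x \<and> x \<le> 2*s \<and> s < y \<and> y \<le> 2*s \<and> x \<noteq> y)"
  proof
    assume "(y,x) \<in> {(s + i, s + j) | i j. 1 \<le> i \<and> i \<le> s \<and> 1 \<le> j \<and> j \<le> s \<and> i \<noteq> j}"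
    then show "s < x \<and> x \<le> 2*s \<and> s < y \<and> y \<le> 2*s \<and> x \<noteq> y" by auto
  next
    assume H: "s < x \<and> x \<le> 2*s \<and> s < y \<and> y \<le> 2*s \<and> x \<noteq> y"
    then have "y = s + (y - s) \<and> x = s + (x - s) \<and> 1 \<le> y - s \<and> y - s \<le> s \<and> 1 \<le> x - s \<and> x - s \<le> s \<and> y - s \<noteq> x - s" by auto
    then show "(y,x) \<in> {(s + i, s + j) | i j. 1 \<le> i \<and> i \<le> s \<and> 1 \<le> j \<and> j \<le> s \<and> i \<noteq> j}" by blast
  qed
  show ?thesis unfolding pent_E_def symrel_def Un_iff 1 2 by auto
qed

lemma pent_contra:
  assumes a: "a \<in> A" and l: "l \<in> {1..t}" and b1: "b1 \<in> B l" and b2: "b2 \<in> B l"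
    and c1: "c1 \<in> C l" and c2: "c2 \<in> C l" and nb: "\<not> E b1 b2" and ab1: "E a b1" and ab2: "E a b2"
    and bc1: "E b1 c1" and bc2: "E b2 c2" and nbc1: "\<not> E b1 c2" and nbc2: "\<not> E b2 c1"
    and N: "\<forall>j\<in>{1..t}. j \<noteq> l \<longrightarrow> (\<exists>x\<in>B j. E a x)"
  shows False
proof -
  have "\<forall>j\<in>{1..t}-{l}. \<exists>x. x \<in> B j \<and> E a x" using N by blast
  then obtain g where g: "\<forall>j\<in>{1..t}-{l}. g j \<in> B j \<and> E a (g j)" by metis
  have "\<forall>j\<in>{1..t}-{l}. \<exists>y. y \<in> C j \<and> E (g j) y" using g w_nC by blast
  then obtain h where h: "\<forall>j\<in>{1..t}-{l}. h j \<in> C j \<and> E (g j) (h j)" by metis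
  define s where "s = t + 1"
  define cls where "cls n = (if n = s then l else n)" for n
  define sg where "sg n = (if n = l then b1 else if n = s then b2 else g n)" for n
  define tu where "tu n = (if n = l then c1 else if n = s then c2 else h n)" for n
  have ls: "l \<noteq> s" "1 \<le> l" "l \<le> s" using l s_def by auto
  have c12: "c1 \<noteq> c2" using bc1 nbc1 by blast
  have b12: "b1 \<noteq> b2" using bc1 nbc2 by blast
  have cls: "n \<in> {1..s} \<Longrightarrow> cls n \<in> {1..t}" for n using l unfolding cls_def s_def by auto
  have sgB: "n \<in> {1..s} \<Longrightarrow> sg n \<in> B (cls n)" for n
    using g b1 b2 ls unfolding sg_def cls_def s_def by auto
  have tuC: "n \<in> {1..s} \<Longrightarrow> tu n \<in> C (cls n)" for n
    using h c1 c2 ls unfolding tu_def cls_def s_def by auto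
  have asg: "n \<in> {1..s} \<Longrightarrow> E a (sg n)" for n
    using g ab1 ab2 ls unfolding sg_def s_def by auto
  have sgtu: "n \<in> {1..s} \<Longrightarrow> E (sg n) (tu n)" for n
    using h bc1 bc2 ls unfolding sg_def tu_def s_def by auto
  have same: "n \<in> {1..s} \<Longrightarrow> m \<in> {1..s} \<Longrightarrow> n \<noteq> m \<Longrightarrow> cls n = cls m \<Longrightarrow>
      (sg n = b1 \<and> sg m = b2 \<and> tu n = c1 \<and> tu m = c2) \<or> (sg n = b2 \<and> sg m = b1 \<and> tu n = c2 \<and> tu m = c1)" for n m
    using ls unfolding cls_def sg_def tu_def by (auto split: if_splits)
  have pair: "\<not> E (sg n) (sg m) \<and> E (tu n) (tu m) \<and> \<not> E (sg n) (tu m) \<and> sg n \<noteq> sg m \<and> tu n \<noteq> tu m"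
    if nm: "n \<in> {1..s}" "m \<in> {1..s}" "n \<noteq> m" for n m
  proof (cases "cls n = cls m")
    case True
    from same[OF nm True] show ?thesis
      using nb nbc1 nbc2 b12 c12 C_clique[OF l c1 c2 c12] C_clique[OF l c2 c1] Esym by auto
  next
    case False
    have 1: "\<not> E (sg n) (sg m)" using adj_BB[OF sgB[OF nm(1)] sgB[OF nm(2)] cls[OF nm(1)] cls[OF nm(2)]] False by blast
    have 2: "E (tu n) (tu m)" using adj_CC[OF tuC[OF nm(1)] tuC[OF nm(2)] cls[OF nm(1)] cls[OF nm(2)]] False by blast
    have 3: "\<not> E (sg n) (tu m)" using adj_BC[OF sgB[OF nm(1)] tuC[OF nm(2)] cls[OF nm(1)] cls[OF nm(2)]] False by blast
    have 4: "sg n \<noteq> sg m" using kd_BB[OF sgB[OF nm(1)] sgB[OF nm(2)] cls[OF nm(1)] cls[OF nm(2)]] False by blast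
    have 5: "tu n \<noteq> tu m" using kd_CC[OF tuC[OF nm(1)] tuC[OF nm(2)] cls[OF nm(1)] cls[OF nm(2)]] False by blast
    show ?thesis using 1 2 3 4 5 by blast
  qed
  have asgne: "n \<in> {1..s} \<Longrightarrow> a \<noteq> sg n" for n using kd_AB[OF a sgB cls] by blast
  have atu: "n \<in> {1..s} \<Longrightarrow> \<not> E a (tu n) \<and> a \<noteq> tu n" for n using adj_AC[OF a tuC cls] kd_AC[OF a tuC cls] by blast
  have sgtune: "n \<in> {1..s} \<Longrightarrow> m \<in> {1..s} \<Longrightarrow> sg n \<noteq> tu m" for n m using kd_BC[OF sgB tuC cls cls] by blast
  define f where "f x = (if x = 0 then a else if x \<le> s then sg x else tu (x - s))" for x
  have reg: "x \<in> {0..2*s} \<Longrightarrow> x = 0 \<or> (x \<in> {1..s} \<and> f x = sg x) \<or> (x - s \<in> {1..s} \<and> s < x \<and> f x = tu (x - s))" for x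
    unfolding f_def by auto
  have f0: "f 0 = a" unfolding f_def by simp
  have "induced_sub (pent_V s) (pent_E s) V E"
    unfolding induced_sub_def
  proof (intro exI conjI)
    show "inj_on f (pent_V s)"
    proof (rule inj_onI)
      fix x y assume x: "x \<in> pent_V s" and y: "y \<in> pent_V s" and fxy: "f x = f y"
      from x y have x': "x \<in> {0..2*s}" and y': "y \<in> {0..2*s}" by (auto simp: pent_V_def)
      show "x = y"
      proof (rule ccontr)
        assume xy: "x \<noteq> y"
        consider (a) "x = 0" | (b) "x \<in> {1..s}" "f x = sg x" | (c) "x - s \<in> {1..s}" "s < x" "f x = tu (x - s)"
          using reg[OF x'] by blast
        then show False
        proof cases
          case a
          consider (a) "y = 0" | (b) "y \<in> {1..s}" "f y = sg y" | (c) "y - s \<in> {1..s}" "s < y" "f y = tu (y - s)"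
            using reg[OF y'] by blast
          then show False
          proof cases
            case a then show False using xy \<open>x = 0\<close> by simp
          next
            case b then show False using \<open>x = 0\<close> f0 fxy asgne[OF b(1)] by simp
          next
            case c then show False using \<open>x = 0\<close> f0 fxy atu[OF c(1)] by simp
          qed
        next
          case b
          note xb = b
          consider (a) "y = 0" | (b) "y \<in> {1..s}" "f y = sg y" | (c) "y - s \<in> {1..s}" "s < y" "f y = tu (y - s)"
            using reg[OF y'] by blast
          then show False
          proof cases
            case a then show False using xb f0 fxy asgne[OF xb(1)] by simp
          next
            case b then show False using xb fxy pair[OF xb(1) b(1) xy] by simp
          next
            case c then show False using xb fxy sgtune[OF xb(1) c(1)] by simp
          qed
        next
          case c
          note xc = c
          consider (a) "y = 0" | (b) "y \<in> {1..s}" "f y = sg y" | (c) "y - s \<in> {1..s}" "s < y" "f y = tu (y - s)"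
            using reg[OF y'] by blast
          then show False
          proof cases
            case a then show False using xc f0 fxy atu[OF xc(1)] by simp
          next
            case b then show False using xc fxy sgtune[OF b(1) xc(1)] by simp
          next
            case c
            have "x - s \<noteq> y - s" using xc(2) c(2) xy by arith
            then show False using xc c fxy pair[OF xc(1) c(1)] by simp
          qed
        qed
      qed
    qed
    show "f ` pent_V s \<subseteq> V"
    proof
      fix z assume "z \<in> f ` pent_V s"
      then obtain x where x: "x \<in> {0..2*s}" and z: "z = f x" by (auto simp: pent_V_def)
      from reg[OF x] show "z \<in> V"
        using z f0 memV_A[OF a] memV_B[OF cls sgB] memV_C[OF cls tuC] by auto
    qed
    show "\<forall>x\<in>pent_V s. \<forall>y\<in>pent_V s. pent_E s x y = E (f x) (f y)"
    proof (intro ballI)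
      fix x y assume x: "x \<in> pent_V s" and y: "y \<in> pent_V s"
      from x y have x': "x \<in> {0..2*s}" and y': "y \<in> {0..2*s}" by (auto simp: pent_V_def)
      have xs: "x \<le> 2*s" "y \<le> 2*s" using x' y' by auto
      show "pent_E s x y = E (f x) (f y)"
      proof (cases "x = y")
        case True then show ?thesis by (simp add: pentE irr)
      next
        case xy: False
        have BC: "pent_E s p q = E (f p) (f q)" if p: "p \<in> {1..s}" "f p = sg p" and q: "q - s \<in> {1..s}" "s < q" "f q = tu (q - s)" "q \<le> 2*s" for p q
        proof (cases "p = q - s")
          case True
          then have "q = s + p" using q(2) by arith
          then show ?thesis using p q sgtu[OF p(1)] True by (simp add: pentE)
        next
          case False
          then have "q \<noteq> s + p" by arith
          moreover have "\<not> E (f p) (f q)" using p q pair[OF p(1) q(1) False] by simp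
          ultimately show ?thesis using p q by (auto simp: pentE)
        qed
        consider (a) "x = 0" | (b) "x \<in> {1..s}" "f x = sg x" | (c) "x - s \<in> {1..s}" "s < x" "f x = tu (x - s)"
          using reg[OF x'] by blast
        then show ?thesis
        proof cases
          case a
          note xa = a
          consider (a) "y = 0" | (b) "y \<in> {1..s}" "f y = sg y" | (c) "y - s \<in> {1..s}" "s < y" "f y = tu (y - s)"
            using reg[OF y'] by blast
          then show ?thesis
          proof cases
            case a then show ?thesis using xy xa by simp
          next
            case b then show ?thesis using xa f0 asg[OF b(1)] by (auto simp: pentE)
          next
            case c then show ?thesis using xa f0 atu[OF c(1)] by (auto simp: pentE)
          qed
        next
          case b
          note xb = b
          consider (a) "y = 0" | (b) "y \<in> {1..s}" "f y = sg y" | (c) "y - s \<in> {1..s}" "s < y" "f y = tu (y - s)"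
            using reg[OF y'] by blast
          then show ?thesis
          proof cases
            case a then show ?thesis using xb f0 asg[OF xb(1)] Esym by (auto simp: pentE)
          next
            case b then show ?thesis using xb pair[OF xb(1) b(1) xy] by (auto simp: pentE)
          next
            case c then show ?thesis using BC[OF xb c xs(2)] by simp
          qed
        next
          case c
          note xc = c
          consider (a) "y = 0" | (b) "y \<in> {1..s}" "f y = sg y" | (c) "y - s \<in> {1..s}" "s < y" "f y = tu (y - s)"
            using reg[OF y'] by blast
          then show ?thesis
          proof cases
            case a then show ?thesis using xc f0 atu[OF xc(1)] Esym by (auto simp: pentE)
          next
            case b
            have "pent_E s y x = E (f y) (f x)" using BC[OF b xc xs(1)] by simp
            moreover have "pent_E s y x = pent_E s x y" by (auto simp: pentE)
            ultimately show ?thesis using Esym by simp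
          next
            case c
            have "x - s \<noteq> y - s" using xc(2) c(2) xy by arith
            then show ?thesis using xc c xy xs pair[OF xc(1) c(1)] by (auto simp: pentE)
          qed
        qed
      qed
    qed
  qed
  with fpent show False unfolding s_def free_of_def by blast
qed

lemma tpPENT:
  assumes "x0 \<in> A" "x1 \<in> B l1" "x2 \<in> B l2" "x3 \<in> C l3" "x4 \<in> C l4" "l1 \<in> {1..t}" "l2 \<in> {1..t}" "l3 \<in> {1..t}" "l4 \<in> {1..t}"
  shows "\<not> (((x1 \<noteq> x2) \<and> (x3 \<noteq> x4) \<and> (l1 = l2) \<and> (l1 = l3) \<and> (l1 = l4) \<and> (\<not> (E x1 x2)) \<and> (E x0 x1) \<and> (E x0 x2) \<and> (E x1 x3) \<and> (E x2 x4) \<and> (\<not> (E x1 x4)) \<and> (\<not> (E x2 x3))))"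
proof
  assume H: "((x1 \<noteq> x2) \<and> (x3 \<noteq> x4) \<and> (l1 = l2) \<and> (l1 = l3) \<and> (l1 = l4) \<and> (\<not> (E x1 x2)) \<and> (E x0 x1) \<and> (E x0 x2) \<and> (E x1 x3) \<and> (E x2 x4) \<and> (\<not> (E x1 x4)) \<and> (\<not> (E x2 x3)))"
  have N: "\<forall>j\<in>{1..t}. j \<noteq> l1 \<longrightarrow> (\<exists>x\<in>B j. E x0 x)"
  proof (intro ballI impI)
    fix j assume j: "j \<in> {1..t}" "j \<noteq> l1"
    show "\<exists>x\<in>B j. E x0 x"
    proof (rule ccontr)
      assume "\<not> (\<exists>x\<in>B j. E x0 x)"
      then have U: "\<And>x k. k \<in> {1..t} \<Longrightarrow> x \<in> B k \<Longrightarrow> k = j \<longrightarrow> \<not> E x0 x" by blast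
      show False
        using L2a_raw[of l1 j x0 x1 x2 x3 x4, OF assms(6) j(1) assms(1) assms(2)] U H assms j by auto
    qed
  qed
  show False
    using pent_contra[OF assms(1) assms(6) assms(2), of x2 x3 x4] H assms N by auto
qed

lemma L2_raw:
  assumes ix0: "i0 \<in> {1..t}"
    and m0: "v0 \<in> B i0"
    and m1: "v1 \<in> B i0"
    and F0: "(v0 \<noteq> v1)"
    and F1: "\<not> (E v0 v1)"
  shows False
proof -
  obtain v2 where m2: "v2 \<in> A" and F2: "E v0 v2" using w_nA[OF m0 ix0] by blast
  obtain v3 where m3: "v3 \<in> C i0" and F3: "E v0 v3" using w_nC[OF m0 ix0] by blast
  obtain v4 where m4: "v4 \<in> A" and F4: "E v1 v4" using w_nA[OF m1 ix0] by blast
  obtain v5 where m5: "v5 \<in> C i0" and F5: "E v1 v5" using w_nC[OF m1 ix0] by blast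
  obtain i1 i2 v6 v7 where ix1: "i1 \<in> {1..t}" and ix2: "i2 \<in> {1..t}" and m6: "v6 \<in> B i1" and m7: "v7 \<in> B i2" and F6: "((i1 \<noteq> i2) \<and> (E v2 v6) \<and> (E v2 v7))" using w_two[OF m2] by blast
  obtain i3 i4 v8 v9 where ix3: "i3 \<in> {1..t}" and ix4: "i4 \<in> {1..t}" and m8: "v8 \<in> B i3" and m9: "v9 \<in> B i4" and F7: "((i3 \<noteq> i4) \<and> (E v4 v8) \<and> (E v4 v9))" using w_two[OF m4] by blast
  obtain v10 where m10: "v10 \<in> C i1" and F8: "E v6 v10" using w_nC[OF m6 ix1] by blast
  obtain i5 where ix5: "i5 \<in> {1..t}" and F10: "((i0 \<noteq> i1) \<longrightarrow> (((i5 \<noteq> i0) \<and> (i5 \<noteq> i1))))" using w_third[of i0 i1] by blast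
  obtain v14 where m14: "v14 \<in> C i2" and F11: "E v7 v14" using w_nC[OF m7 ix2] by blast
  obtain i6 where ix6: "i6 \<in> {1..t}" and F14: "((i0 \<noteq> i2) \<longrightarrow> (((i6 \<noteq> i0) \<and> (i6 \<noteq> i2))))" using w_third[of i0 i2] by blast
  obtain v12 where m12: "v12 \<in> B i5" using w_BOf[OF ix5] by blast
  obtain v13 where m13: "v13 \<in> C i5" using w_COf[OF ix5] by blast
  obtain v18 where m18: "v18 \<in> C i6" using w_COf[OF ix6] by blast
  obtain v16 where m16: "v16 \<in> C i5" and F13: "E v12 v16" using w_nC[OF m12 ix5] by blast
  obtain v21 where m21: "v21 \<in> B i6" and F17: "E v18 v21" using w_nB[OF m18 ix6] by blast
  have vV0: "v0 \<in> V" using ix0 m0 by (rule memV_B)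
  have vV1: "v1 \<in> V" using ix0 m1 by (rule memV_B)
  have vV2: "v2 \<in> V" using m2 by (rule memV_A)
  have vV3: "v3 \<in> V" using ix0 m3 by (rule memV_C)
  have vV4: "v4 \<in> V" using m4 by (rule memV_A)
  have vV5: "v5 \<in> V" using ix0 m5 by (rule memV_C)
  have vV6: "v6 \<in> V" using ix1 m6 by (rule memV_B)
  have vV7: "v7 \<in> V" using ix2 m7 by (rule memV_B)
  have vV8: "v8 \<in> V" using ix3 m8 by (rule memV_B)
  have vV9: "v9 \<in> V" using ix4 m9 by (rule memV_B)
  have vV10: "v10 \<in> V" using ix1 m10 by (rule memV_C)
  have vV12: "v12 \<in> V" using ix5 m12 by (rule memV_B)
  have vV13: "v13 \<in> V" using ix5 m13 by (rule memV_C)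
  have vV14: "v14 \<in> V" using ix2 m14 by (rule memV_C)
  have vV16: "v16 \<in> V" using ix5 m16 by (rule memV_C)
  have vV18: "v18 \<in> V" using ix6 m18 by (rule memV_C)
  have vV21: "v21 \<in> V" using ix6 m21 by (rule memV_B)
  show False
    by (smt (z3) F0
      F1
      F10
      F11
      F13
      F14
      F17
      F2
      F3
      F4
      F5
      F6
      F7
      F8
      no2P3[OF vV0 vV2 vV6 vV1 vV4 vV9]
      no2P3[OF vV0 vV2 vV6 vV1 vV4 vV8]
      no2P3[OF vV0 vV2 vV4 vV10 vV16 vV12]
      noC6[OF vV2 vV4 vV1 vV5 vV16 vV12]
      noT0[OF vV2 vV4 vV0 vV1 vV6 vV12 vV5 vV10 vV16]
      noC4[OF vV0 vV2 vV1 vV3]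
      noC6[OF vV1 vV5 vV14 vV7 vV2 vV4]
      noC6[OF vV2 vV4 vV12 vV16 vV3 vV0]
      noC7[OF vV7 vV2 vV0 vV3 vV1 vV4 vV8]
      no2P3[OF vV0 vV2 vV4 vV14 vV18 vV21]
      no2P3[OF vV0 vV2 vV7 vV1 vV5 vV18]
      noC6[OF vV2 vV21 vV18 vV5 vV1 vV4]
      noC6[OF vV2 vV0 vV3 vV18 vV21 vV4]
      noC4[OF vV0 vV4 vV1 vV5]
      noC4[OF vV4 vV0 vV5 vV1]
      noT0[OF vV2 vV4 vV0 vV1 vV7 vV21 vV5 vV14 vV18]
      noC7[OF vV1 vV5 vV0 vV2 vV6 vV9 vV4]
      no2P3[OF vV2 vV0 vV3 vV1 vV4 vV8]
      no2P3[OF vV2 vV0 vV3 vV1 vV4 vV9]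
      noC7[OF vV1 vV5 vV0 vV2 vV7 vV9 vV4]
      noC4[OF vV0 vV4 vV1 vV3]
      noC6[OF vV1 vV5 vV0 vV2 vV9 vV4]
      noC6[OF vV1 vV5 vV0 vV2 vV6 vV4]
      noC6[OF vV1 vV5 vV0 vV2 vV8 vV4]
      noC6[OF vV1 vV3 vV0 vV2 vV7 vV4]
      no2P3[OF vV0 vV2 vV7 vV1 vV4 vV9]
      no2P3[OF vV0 vV3 vV13 vV6 vV8 vV4]
      noC6[OF vV4 vV1 vV5 vV10 vV6 vV2]
      noC4[OF vV0 vV10 vV6 vV2]
      no2P3[OF vV0 vV2 vV7 vV1 vV4 vV8]
      tpPENT[OF m2 m0 m1 m3 m5 ix0 ix0 ix0 ix0]
      tpPENT[OF m2 m1 m0 m5 m3 ix0 ix0 ix0 ix0]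
      noC4[OF vV0 vV2 vV1 vV5]
      noC4[OF vV0 vV5 vV1 vV2]
      no2P3[OF vV0 vV2 vV6 vV1 vV5 vV13]
      adj_BB[OF m0 m12 ix0 ix5]
      adj_BC[OF m0 m13 ix0 ix5]
      adj_BC[OF m0 m14 ix0 ix2]
      adj_BC[OF m0 m16 ix0 ix5]
      adj_BC[OF m0 m18 ix0 ix6]
      adj_BB[OF m0 m21 ix0 ix6]
      adj_BB[OF m0 m6 ix0 ix1]
      adj_BB[OF m0 m7 ix0 ix2]
      adj_BB[OF m0 m8 ix0 ix3]
      adj_BB[OF m0 m9 ix0 ix4]
      adj_CB[OF m10 m12 ix1 ix5]
      adj_CC[OF m10 m16 ix1 ix5]
      adj_CC[OF m14 m18 ix2 ix6]
      adj_CB[OF m14 m21 ix2 ix6]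
      adj_BC[OF m1 m10 ix0 ix1]
      adj_BB[OF m1 m12 ix0 ix5]
      adj_BC[OF m1 m13 ix0 ix5]
      adj_BC[OF m1 m14 ix0 ix2]
      adj_BC[OF m1 m16 ix0 ix5]
      adj_BC[OF m1 m18 ix0 ix6]
      adj_BB[OF m1 m21 ix0 ix6]
      adj_BB[OF m1 m6 ix0 ix1]
      adj_BB[OF m1 m7 ix0 ix2]
      adj_BB[OF m1 m8 ix0 ix3]
      adj_BB[OF m1 m9 ix0 ix4]
      adj_AC[OF m2 m10 ix1]
      adj_AC[OF m2 m13 ix5]
      adj_AC[OF m2 m14 ix2]
      adj_AC[OF m2 m16 ix5]
      adj_AC[OF m2 m18 ix6]
      adj_AC[OF m2 m3 ix0]
      adj_AC[OF m2 m5 ix0]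
      adj_CB[OF m3 m12 ix0 ix5]
      adj_CC[OF m3 m13 ix0 ix5]
      adj_CC[OF m3 m16 ix0 ix5]
      adj_CC[OF m3 m18 ix0 ix6]
      adj_CB[OF m3 m21 ix0 ix6]
      adj_CA[OF m3 m4 ix0]
      adj_CB[OF m3 m6 ix0 ix1]
      adj_CB[OF m3 m7 ix0 ix2]
      adj_CB[OF m3 m8 ix0 ix3]
      adj_CB[OF m3 m9 ix0 ix4]
      adj_AC[OF m4 m10 ix1]
      adj_AC[OF m4 m13 ix5]
      adj_AC[OF m4 m14 ix2]
      adj_AC[OF m4 m16 ix5]
      adj_AC[OF m4 m18 ix6]
      adj_AC[OF m4 m5 ix0]
      adj_CC[OF m5 m10 ix0 ix1]
      adj_CB[OF m5 m12 ix0 ix5]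
      adj_CC[OF m5 m13 ix0 ix5]
      adj_CC[OF m5 m14 ix0 ix2]
      adj_CC[OF m5 m16 ix0 ix5]
      adj_CC[OF m5 m18 ix0 ix6]
      adj_CB[OF m5 m21 ix0 ix6]
      adj_CB[OF m5 m6 ix0 ix1]
      adj_CB[OF m5 m7 ix0 ix2]
      adj_CB[OF m5 m8 ix0 ix3]
      adj_CB[OF m5 m9 ix0 ix4]
      adj_BB[OF m6 m12 ix1 ix5]
      adj_BC[OF m6 m13 ix1 ix5]
      adj_BC[OF m6 m16 ix1 ix5]
      adj_BB[OF m6 m8 ix1 ix3]
      adj_BC[OF m7 m18 ix2 ix6]
      adj_BB[OF m7 m21 ix2 ix6]
      adj_BC[OF m8 m13 ix3 ix5]
      kd_BC[OF m0 m10 ix0 ix1]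
      kd_BB[OF m0 m12 ix0 ix5]
      kd_BC[OF m0 m13 ix0 ix5]
      kd_BC[OF m0 m14 ix0 ix2]
      kd_BC[OF m0 m16 ix0 ix5]
      kd_BC[OF m0 m18 ix0 ix6]
      kd_BA[OF m0 m2 ix0]
      kd_BB[OF m0 m21 ix0 ix6]
      kd_BC[OF m0 m3 ix0 ix0]
      kd_BA[OF m0 m4 ix0]
      kd_BC[OF m0 m5 ix0 ix0]
      kd_BB[OF m0 m6 ix0 ix1]
      kd_BB[OF m0 m7 ix0 ix2]
      kd_BB[OF m0 m8 ix0 ix3]
      kd_BB[OF m0 m9 ix0 ix4]
      kd_CB[OF m10 m12 ix1 ix5]
      kd_CC[OF m10 m16 ix1 ix5]
      kd_BC[OF m12 m16 ix5 ix5]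
      kd_CC[OF m14 m18 ix2 ix6]
      kd_CB[OF m14 m21 ix2 ix6]
      kd_CB[OF m18 m21 ix6 ix6]
      kd_BC[OF m1 m10 ix0 ix1]
      kd_BB[OF m1 m12 ix0 ix5]
      kd_BC[OF m1 m13 ix0 ix5]
      kd_BC[OF m1 m14 ix0 ix2]
      kd_BC[OF m1 m16 ix0 ix5]
      kd_BC[OF m1 m18 ix0 ix6]
      kd_BA[OF m1 m2 ix0]
      kd_BB[OF m1 m21 ix0 ix6]
      kd_BC[OF m1 m3 ix0 ix0]
      kd_BA[OF m1 m4 ix0]
      kd_BC[OF m1 m5 ix0 ix0]
      kd_BB[OF m1 m6 ix0 ix1]
      kd_BB[OF m1 m7 ix0 ix2]
      kd_BB[OF m1 m8 ix0 ix3]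
      kd_BB[OF m1 m9 ix0 ix4]
      kd_AC[OF m2 m10 ix1]
      kd_AB[OF m2 m12 ix5]
      kd_AC[OF m2 m13 ix5]
      kd_AC[OF m2 m14 ix2]
      kd_AC[OF m2 m16 ix5]
      kd_AC[OF m2 m18 ix6]
      kd_AB[OF m2 m21 ix6]
      kd_AC[OF m2 m3 ix0]
      kd_AC[OF m2 m5 ix0]
      kd_AB[OF m2 m6 ix1]
      kd_AB[OF m2 m7 ix2]
      kd_AB[OF m2 m8 ix3]
      kd_AB[OF m2 m9 ix4]
      kd_CB[OF m3 m12 ix0 ix5]
      kd_CC[OF m3 m13 ix0 ix5]
      kd_CC[OF m3 m16 ix0 ix5]
      kd_CC[OF m3 m18 ix0 ix6]
      kd_CB[OF m3 m21 ix0 ix6]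
      kd_CA[OF m3 m4 ix0]
      kd_CB[OF m3 m6 ix0 ix1]
      kd_CB[OF m3 m7 ix0 ix2]
      kd_CB[OF m3 m8 ix0 ix3]
      kd_CB[OF m3 m9 ix0 ix4]
      kd_AC[OF m4 m10 ix1]
      kd_AB[OF m4 m12 ix5]
      kd_AC[OF m4 m13 ix5]
      kd_AC[OF m4 m14 ix2]
      kd_AC[OF m4 m16 ix5]
      kd_AC[OF m4 m18 ix6]
      kd_AB[OF m4 m21 ix6]
      kd_AC[OF m4 m5 ix0]
      kd_AB[OF m4 m6 ix1]
      kd_AB[OF m4 m7 ix2]
      kd_AB[OF m4 m8 ix3]
      kd_AB[OF m4 m9 ix4]
      kd_CC[OF m5 m10 ix0 ix1]
      kd_CB[OF m5 m12 ix0 ix5]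
      kd_CC[OF m5 m13 ix0 ix5]
      kd_CC[OF m5 m14 ix0 ix2]
      kd_CC[OF m5 m16 ix0 ix5]
      kd_CC[OF m5 m18 ix0 ix6]
      kd_CB[OF m5 m21 ix0 ix6]
      kd_CB[OF m5 m6 ix0 ix1]
      kd_CB[OF m5 m7 ix0 ix2]
      kd_CB[OF m5 m8 ix0 ix3]
      kd_CB[OF m5 m9 ix0 ix4]
      kd_BC[OF m6 m10 ix1 ix1]
      kd_BB[OF m6 m12 ix1 ix5]
      kd_BC[OF m6 m13 ix1 ix5]
      kd_BC[OF m6 m16 ix1 ix5]
      kd_BC[OF m7 m14 ix2 ix2]
      kd_BC[OF m7 m18 ix2 ix6]
      kd_BB[OF m7 m21 ix2 ix6]
      kd_BC[OF m8 m13 ix3 ix5]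
      Esym[of v0 v1]
      Esym[of v0 v12]
      Esym[of v0 v16]
      Esym[of v0 v2]
      Esym[of v0 v3]
      Esym[of v0 v5]
      Esym[of v0 v7]
      Esym[of v10 v12]
      Esym[of v12 v16]
      Esym[of v14 v21]
      Esym[of v18 v21]
      Esym[of v1 v18]
      Esym[of v1 v21]
      Esym[of v1 v3]
      Esym[of v1 v4]
      Esym[of v1 v5]
      Esym[of v1 v6]
      Esym[of v1 v7]
      Esym[of v2 v10]
      Esym[of v2 v14]
      Esym[of v2 v3]
      Esym[of v2 v4]
      Esym[of v2 v5]
      Esym[of v2 v6]
      Esym[of v2 v7]
      Esym[of v3 v12]
      Esym[of v3 v16]
      Esym[of v3 v4]
      Esym[of v3 v7]
      Esym[of v4 v13]
      Esym[of v4 v14]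
      Esym[of v4 v18]
      Esym[of v4 v21]
      Esym[of v4 v5]
      Esym[of v4 v7]
      Esym[of v4 v8]
      Esym[of v4 v9]
      Esym[of v5 v12]
      Esym[of v5 v18]
      Esym[of v5 v21]
      Esym[of v5 v6]
      Esym[of v5 v7]
      Esym[of v6 v10]
      Esym[of v6 v13]
      Esym[of v7 v14]
      Esym[of v8 v13])
qed

lemma B_clique: "i \<in> {1..t} \<Longrightarrow> u \<in> B i \<Longrightarrow> v \<in> B i \<Longrightarrow> u \<noteq> v \<Longrightarrow> E u v"
  using L2_raw by blast
lemma cl_BB: "u \<in> B i \<Longrightarrow> v \<in> B j \<Longrightarrow> i \<in> {1..t} \<Longrightarrow> j \<in> {1..t} \<Longrightarrow> i = j \<longrightarrow> u \<noteq> v \<longrightarrow> E u v"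
  using B_clique by blast

lemma L3_raw:
  assumes m0: "v0 \<in> A"
    and m1: "v1 \<in> A"
    and F0: "(v0 \<noteq> v1)"
    and F1: "\<not> (E v0 v1)"
  shows False
proof -
  obtain i0 i1 v2 v3 where ix0: "i0 \<in> {1..t}" and ix1: "i1 \<in> {1..t}" and m2: "v2 \<in> B i0" and m3: "v3 \<in> B i1" and F2: "((i0 \<noteq> i1) \<and> (E v0 v2) \<and> (E v0 v3))" using w_two[OF m0] by blast
  obtain i2 i3 v4 v5 where ix2: "i2 \<in> {1..t}" and ix3: "i3 \<in> {1..t}" and m4: "v4 \<in> B i2" and m5: "v5 \<in> B i3" and F3: "((i2 \<noteq> i3) \<and> (E v1 v4) \<and> (E v1 v5))" using w_two[OF m1] by blast
  obtain v6 where m6: "v6 \<in> C i0" and F4: "E v2 v6" using w_nC[OF m2 ix0] by blast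
  obtain v7 where m7: "v7 \<in> C i1" and F5: "E v3 v7" using w_nC[OF m3 ix1] by blast
  obtain v8 where m8: "v8 \<in> C i3" and F6: "E v5 v8" using w_nC[OF m5 ix3] by blast
  obtain i4 where ix4: "i4 \<in> {1..t}" and F7: "((i0 \<noteq> i1) \<longrightarrow> (((i4 \<noteq> i0) \<and> (i4 \<noteq> i1))))" using w_third[of i0 i1] by blast
  obtain v9 where m9: "v9 \<in> C i2" and F8: "E v4 v9" using w_nC[OF m4 ix2] by blast
  obtain v10 where m10: "v10 \<in> B i4" using w_BOf[OF ix4] by blast
  obtain v11 where m11: "v11 \<in> C i4" using w_COf[OF ix4] by blast
  obtain v14 where m14: "v14 \<in> B i4" and F11: "E v11 v14" using w_nB[OF m11 ix4] by blast
  have vV0: "v0 \<in> V" using m0 by (rule memV_A)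
  have vV1: "v1 \<in> V" using m1 by (rule memV_A)
  have vV2: "v2 \<in> V" using ix0 m2 by (rule memV_B)
  have vV3: "v3 \<in> V" using ix1 m3 by (rule memV_B)
  have vV4: "v4 \<in> V" using ix2 m4 by (rule memV_B)
  have vV5: "v5 \<in> V" using ix3 m5 by (rule memV_B)
  have vV6: "v6 \<in> V" using ix0 m6 by (rule memV_C)
  have vV7: "v7 \<in> V" using ix1 m7 by (rule memV_C)
  have vV8: "v8 \<in> V" using ix3 m8 by (rule memV_C)
  have vV9: "v9 \<in> V" using ix2 m9 by (rule memV_C)
  have vV10: "v10 \<in> V" using ix4 m10 by (rule memV_B)
  have vV11: "v11 \<in> V" using ix4 m11 by (rule memV_C)
  have vV14: "v14 \<in> V" using ix4 m14 by (rule memV_B)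
  show False
    by (smt (z3) F0
      F1
      F11
      F2
      F3
      F4
      F5
      F6
      F7
      F8
      noC7[OF vV1 vV2 vV0 vV3 vV7 vV9 vV4]
      no2P3[OF vV10 vV14 vV1 vV3 vV7 vV6]
      noC4[OF vV2 vV0 vV4 vV1]
      noC7[OF vV0 vV2 vV1 vV14 vV11 vV7 vV3]
      no2P3[OF vV0 vV2 vV4 vV7 vV11 vV14]
      no2P3[OF vV0 vV2 vV6 vV4 vV1 vV10]
      no2P3[OF vV0 vV3 vV4 vV5 vV8 vV11]
      no2P3[OF vV0 vV3 vV4 vV6 vV8 vV5]
      no2P3[OF vV0 vV3 vV4 vV6 vV11 vV14]
      noC6[OF vV1 vV5 vV8 vV7 vV3 vV4]
      noC7[OF vV4 vV1 vV3 vV0 vV2 vV6 vV9]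
      no2P3[OF vV0 vV14 vV10 vV5 vV8 vV9]
      noC7[OF vV0 vV4 vV1 vV5 vV8 vV11 vV14]
      noC7[OF vV3 vV7 vV8 vV5 vV1 vV4 vV0]
      noC7[OF vV4 vV0 vV2 vV6 vV8 vV5 vV1]
      noC4[OF vV1 vV3 vV0 vV4]
      noC4[OF vV0 vV3 vV1 vV2]
      noC4[OF vV1 vV2 vV0 vV3]
      noC4[OF vV1 vV3 vV0 vV2]
      no2P3[OF vV1 vV4 vV9 vV2 vV0 vV14]
      noC7[OF vV0 vV2 vV6 vV7 vV4 vV1 vV5]
      noC7[OF vV0 vV5 vV1 vV4 vV9 vV11 vV14]
      noC4[OF vV1 vV2 vV0 vV5]
      no2P3[OF vV0 vV2 vV5 vV7 vV11 vV14]
      noC4[OF vV0 vV3 vV1 vV14]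
      noC4[OF vV1 vV3 vV0 vV14]
      noC4[OF vV0 vV2 vV1 vV14]
      noC4[OF vV1 vV2 vV0 vV14]
      no2P3[OF vV1 vV4 vV2 vV3 vV7 vV11]
      no2P3[OF vV1 vV4 vV2 vV7 vV11 vV14]
      no2P3[OF vV1 vV5 vV3 vV2 vV6 vV11]
      no2P3[OF vV1 vV5 vV3 vV6 vV11 vV14]
      noC4[OF vV0 vV4 vV1 vV5]
      noC4[OF vV0 vV4 vV1 vV10]
      noC4[OF vV0 vV5 vV1 vV10]
      noC4[OF vV1 vV5 vV0 vV4]
      no2P3[OF vV1 vV4 vV9 vV2 vV0 vV3]
      no2P3[OF vV0 vV3 vV7 vV4 vV1 vV5]
      adj_AC[OF m0 m11 ix4]
      adj_AC[OF m0 m6 ix0]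
      adj_AC[OF m0 m7 ix1]
      adj_AC[OF m0 m8 ix3]
      adj_AC[OF m0 m9 ix2]
      adj_AC[OF m1 m11 ix4]
      adj_AC[OF m1 m6 ix0]
      adj_AC[OF m1 m7 ix1]
      adj_AC[OF m1 m8 ix3]
      adj_AC[OF m1 m9 ix2]
      adj_BB[OF m2 m10 ix0 ix4]
      adj_BC[OF m2 m11 ix0 ix4]
      adj_BB[OF m2 m14 ix0 ix4]
      adj_BB[OF m2 m3 ix0 ix1]
      adj_BB[OF m2 m4 ix0 ix2]
      adj_BB[OF m2 m5 ix0 ix3]
      adj_BC[OF m2 m7 ix0 ix1]
      adj_BC[OF m2 m8 ix0 ix3]
      adj_BC[OF m2 m9 ix0 ix2]
      adj_BB[OF m3 m10 ix1 ix4]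
      adj_BC[OF m3 m11 ix1 ix4]
      adj_BB[OF m3 m14 ix1 ix4]
      adj_BB[OF m3 m4 ix1 ix2]
      adj_BB[OF m3 m5 ix1 ix3]
      adj_BC[OF m3 m6 ix1 ix0]
      adj_BC[OF m3 m8 ix1 ix3]
      adj_BC[OF m3 m9 ix1 ix2]
      adj_BB[OF m4 m10 ix2 ix4]
      adj_BC[OF m4 m11 ix2 ix4]
      adj_BB[OF m4 m14 ix2 ix4]
      adj_BB[OF m4 m5 ix2 ix3]
      adj_BC[OF m4 m6 ix2 ix0]
      adj_BC[OF m4 m7 ix2 ix1]
      adj_BC[OF m4 m8 ix2 ix3]
      adj_BB[OF m5 m10 ix3 ix4]
      adj_BC[OF m5 m11 ix3 ix4]
      adj_BB[OF m5 m14 ix3 ix4]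
      adj_BC[OF m5 m6 ix3 ix0]
      adj_BC[OF m5 m7 ix3 ix1]
      adj_BC[OF m5 m9 ix3 ix2]
      adj_CB[OF m6 m10 ix0 ix4]
      adj_CC[OF m6 m11 ix0 ix4]
      adj_CB[OF m6 m14 ix0 ix4]
      adj_CC[OF m6 m7 ix0 ix1]
      adj_CC[OF m6 m8 ix0 ix3]
      adj_CC[OF m6 m9 ix0 ix2]
      adj_CB[OF m7 m10 ix1 ix4]
      adj_CC[OF m7 m11 ix1 ix4]
      adj_CB[OF m7 m14 ix1 ix4]
      adj_CC[OF m7 m8 ix1 ix3]
      adj_CC[OF m7 m9 ix1 ix2]
      adj_CB[OF m8 m10 ix3 ix4]
      adj_CC[OF m8 m11 ix3 ix4]
      adj_CB[OF m8 m14 ix3 ix4]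
      adj_CC[OF m8 m9 ix3 ix2]
      adj_CB[OF m9 m10 ix2 ix4]
      adj_CC[OF m9 m11 ix2 ix4]
      adj_CB[OF m9 m14 ix2 ix4]
      cl_BB[OF m10 m14 ix4 ix4]
      cl_BB[OF m2 m4 ix0 ix2]
      cl_BB[OF m2 m5 ix0 ix3]
      cl_BB[OF m3 m4 ix1 ix2]
      cl_BB[OF m3 m5 ix1 ix3]
      kd_AB[OF m0 m10 ix4]
      kd_AC[OF m0 m11 ix4]
      kd_AB[OF m0 m14 ix4]
      kd_AB[OF m0 m2 ix0]
      kd_AB[OF m0 m3 ix1]
      kd_AB[OF m0 m4 ix2]
      kd_AB[OF m0 m5 ix3]
      kd_AC[OF m0 m6 ix0]
      kd_AC[OF m0 m7 ix1]
      kd_AC[OF m0 m8 ix3]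
      kd_AC[OF m0 m9 ix2]
      kd_CB[OF m11 m14 ix4 ix4]
      kd_AB[OF m1 m10 ix4]
      kd_AC[OF m1 m11 ix4]
      kd_AB[OF m1 m14 ix4]
      kd_AB[OF m1 m2 ix0]
      kd_AB[OF m1 m3 ix1]
      kd_AB[OF m1 m4 ix2]
      kd_AB[OF m1 m5 ix3]
      kd_AC[OF m1 m6 ix0]
      kd_AC[OF m1 m7 ix1]
      kd_AC[OF m1 m8 ix3]
      kd_AC[OF m1 m9 ix2]
      kd_BB[OF m2 m10 ix0 ix4]
      kd_BC[OF m2 m11 ix0 ix4]
      kd_BB[OF m2 m14 ix0 ix4]
      kd_BB[OF m2 m3 ix0 ix1]
      kd_BB[OF m2 m4 ix0 ix2]
      kd_BB[OF m2 m5 ix0 ix3]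
      kd_BC[OF m2 m6 ix0 ix0]
      kd_BC[OF m2 m7 ix0 ix1]
      kd_BC[OF m2 m8 ix0 ix3]
      kd_BC[OF m2 m9 ix0 ix2]
      kd_BB[OF m3 m10 ix1 ix4]
      kd_BC[OF m3 m11 ix1 ix4]
      kd_BB[OF m3 m14 ix1 ix4]
      kd_BB[OF m3 m5 ix1 ix3]
      kd_BC[OF m3 m6 ix1 ix0]
      kd_BC[OF m3 m7 ix1 ix1]
      kd_BC[OF m3 m8 ix1 ix3]
      kd_BC[OF m3 m9 ix1 ix2]
      kd_BB[OF m4 m10 ix2 ix4]
      kd_BC[OF m4 m11 ix2 ix4]
      kd_BB[OF m4 m14 ix2 ix4]
      kd_BB[OF m4 m5 ix2 ix3]
      kd_BC[OF m4 m6 ix2 ix0]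
      kd_BC[OF m4 m7 ix2 ix1]
      kd_BC[OF m4 m8 ix2 ix3]
      kd_BC[OF m4 m9 ix2 ix2]
      kd_BB[OF m5 m10 ix3 ix4]
      kd_BC[OF m5 m11 ix3 ix4]
      kd_BB[OF m5 m14 ix3 ix4]
      kd_BC[OF m5 m6 ix3 ix0]
      kd_BC[OF m5 m7 ix3 ix1]
      kd_BC[OF m5 m8 ix3 ix3]
      kd_BC[OF m5 m9 ix3 ix2]
      kd_CB[OF m6 m10 ix0 ix4]
      kd_CC[OF m6 m11 ix0 ix4]
      kd_CB[OF m6 m14 ix0 ix4]
      kd_CC[OF m6 m7 ix0 ix1]
      kd_CC[OF m6 m8 ix0 ix3]
      kd_CC[OF m6 m9 ix0 ix2]
      kd_CB[OF m7 m10 ix1 ix4]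
      kd_CC[OF m7 m11 ix1 ix4]
      kd_CB[OF m7 m14 ix1 ix4]
      kd_CC[OF m7 m8 ix1 ix3]
      kd_CC[OF m7 m9 ix1 ix2]
      kd_CB[OF m8 m10 ix3 ix4]
      kd_CC[OF m8 m11 ix3 ix4]
      kd_CB[OF m8 m14 ix3 ix4]
      kd_CC[OF m8 m9 ix3 ix2]
      kd_CB[OF m9 m10 ix2 ix4]
      kd_CC[OF m9 m11 ix2 ix4]
      kd_CB[OF m9 m14 ix2 ix4]
      Esym[of v0 v1]
      Esym[of v0 v2]
      Esym[of v0 v3]
      Esym[of v0 v4]
      Esym[of v0 v7]
      Esym[of v0 v8]
      Esym[of v0 v9]
      Esym[of v10 v14]
      Esym[of v11 v14]
      Esym[of v1 v10]
      Esym[of v1 v14]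
      Esym[of v1 v2]
      Esym[of v1 v3]
      Esym[of v1 v4]
      Esym[of v1 v5]
      Esym[of v1 v6]
      Esym[of v1 v7]
      Esym[of v1 v8]
      Esym[of v2 v3]
      Esym[of v2 v4]
      Esym[of v2 v5]
      Esym[of v2 v9]
      Esym[of v3 v10]
      Esym[of v3 v11]
      Esym[of v3 v14]
      Esym[of v3 v4]
      Esym[of v3 v5]
      Esym[of v3 v7]
      Esym[of v3 v8]
      Esym[of v3 v9]
      Esym[of v4 v5]
      Esym[of v4 v6]
      Esym[of v4 v7]
      Esym[of v4 v8]
      Esym[of v4 v9]
      Esym[of v5 v10]
      Esym[of v5 v14]
      Esym[of v5 v6]
      Esym[of v5 v7]
      Esym[of v5 v8]
      Esym[of v6 v10]
      Esym[of v6 v14]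
      Esym[of v6 v7]
      Esym[of v7 v10]
      Esym[of v7 v11]
      Esym[of v7 v14]
      Esym[of v7 v8]
      Esym[of v8 v10]
      Esym[of v8 v14]
      Esym[of v9 v10]
      Esym[of v9 v14])
qed

lemma A_clique: "u \<in> A \<Longrightarrow> v \<in> A \<Longrightarrow> u \<noteq> v \<Longrightarrow> E u v"
  using L3_raw by blast
lemma cl_AA: "u \<in> A \<Longrightarrow> v \<in> A \<Longrightarrow> u \<noteq> v \<longrightarrow> E u v"
  using A_clique by blast

lemma L4_raw:
  assumes ix0: "i0 \<in> {1..t}"
    and m0: "v0 \<in> B i0"
    and m1: "v1 \<in> B i0"
    and m2: "v2 \<in> C i0"
    and m3: "v3 \<in> C i0"
    and F0: "((E v0 v2) \<and> (\<not> (E v1 v2)) \<and> (E v1 v3) \<and> (\<not> (E v0 v3)))"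
  shows False
proof -
  have vV0: "v0 \<in> V" using ix0 m0 by (rule memV_B)
  have vV1: "v1 \<in> V" using ix0 m1 by (rule memV_B)
  have vV2: "v2 \<in> V" using ix0 m2 by (rule memV_C)
  have vV3: "v3 \<in> V" using ix0 m3 by (rule memV_C)
  show False
    by (smt (z3) F0
      noC4[OF vV0 vV2 vV3 vV1]
      cl_BB[OF m0 m1 ix0 ix0]
      cl_CC[OF m2 m3 ix0 ix0]
      kd_BC[OF m0 m2 ix0 ix0]
      kd_BC[OF m0 m3 ix0 ix0]
      kd_BC[OF m1 m2 ix0 ix0]
      kd_BC[OF m1 m3 ix0 ix0]
      Esym[of v1 v2]
      Esym[of v1 v3])
qed

lemma L5_raw:
  assumes ix0: "i0 \<in> {1..t}"
    and ix1: "i1 \<in> {1..t}"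
    and m0: "v0 \<in> A"
    and m1: "v1 \<in> A"
    and m2: "v2 \<in> B i0"
    and m3: "v3 \<in> B i1"
    and F0: "((E v0 v2) \<and> (\<not> (E v1 v2)) \<and> (E v1 v3) \<and> (\<not> (E v0 v3)))"
  shows False
proof -
  obtain v8 where m8: "v8 \<in> C i0" and F3: "E v2 v8" using w_nC[OF m2 ix0] by blast
  obtain v9 where m9: "v9 \<in> C i1" and F4: "E v3 v9" using w_nC[OF m3 ix1] by blast
  have vV0: "v0 \<in> V" using m0 by (rule memV_A)
  have vV1: "v1 \<in> V" using m1 by (rule memV_A)
  have vV2: "v2 \<in> V" using ix0 m2 by (rule memV_B)
  have vV3: "v3 \<in> V" using ix1 m3 by (rule memV_B)
  have vV8: "v8 \<in> V" using ix0 m8 by (rule memV_C)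
  have vV9: "v9 \<in> V" using ix1 m9 by (rule memV_C)
  show False
    by (smt (z3) F0
      F3
      F4
      noC6[OF vV3 vV1 vV0 vV2 vV8 vV9]
      noC4[OF vV0 vV1 vV3 vV2]
      noC4[OF vV0 vV2 vV3 vV1]
      adj_AC[OF m0 m8 ix0]
      adj_AC[OF m0 m9 ix1]
      adj_AC[OF m1 m8 ix0]
      adj_AC[OF m1 m9 ix1]
      adj_BC[OF m2 m9 ix0 ix1]
      adj_BC[OF m3 m8 ix1 ix0]
      adj_CC[OF m8 m9 ix0 ix1]
      cl_AA[OF m0 m1]
      cl_BB[OF m2 m3 ix0 ix1]
      kd_AB[OF m0 m2 ix0]
      kd_AB[OF m0 m3 ix1]
      kd_AC[OF m0 m8 ix0]
      kd_AC[OF m0 m9 ix1]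
      kd_AB[OF m1 m2 ix0]
      kd_AB[OF m1 m3 ix1]
      kd_AC[OF m1 m8 ix0]
      kd_AC[OF m1 m9 ix1]
      kd_BC[OF m2 m8 ix0 ix0]
      kd_BC[OF m2 m9 ix0 ix1]
      kd_BC[OF m3 m8 ix1 ix0]
      kd_BC[OF m3 m9 ix1 ix1]
      kd_CC[OF m8 m9 ix0 ix1]
      Esym[of v0 v1]
      Esym[of v0 v3]
      Esym[of v1 v2]
      Esym[of v1 v3])
qed

lemma L6_raw:
  assumes ix0: "i0 \<in> {1..t}"
    and ix1: "i1 \<in> {1..t}"
    and m0: "v0 \<in> A"
    and m1: "v1 \<in> A"
    and m2: "v2 \<in> B i0"
    and m3: "v3 \<in> B i1"
    and F0: "((i0 \<noteq> i1) \<and> (\<not> (E v0 v2)) \<and> (\<not> (E v1 v3)))"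
  shows False
proof -
  obtain i2 i3 v4 v5 where ix2: "i2 \<in> {1..t}" and ix3: "i3 \<in> {1..t}" and m4: "v4 \<in> B i2" and m5: "v5 \<in> B i3" and F1: "((i2 \<noteq> i3) \<and> (E v0 v4) \<and> (E v0 v5))" using w_two[OF m0] by blast
  obtain v9 where m9: "v9 \<in> C i0" and F4: "E v2 v9" using w_nC[OF m2 ix0] by blast
  obtain v11 where m11: "v11 \<in> C i1" and F6: "E v3 v11" using w_nC[OF m3 ix1] by blast
  obtain i6 where ix6: "i6 \<in> {1..t}" and F11: "((i0 \<noteq> i1) \<longrightarrow> (((i6 \<noteq> i0) \<and> (i6 \<noteq> i1))))" using w_third[of i0 i1] by blast
  obtain v17 where m17: "v17 \<in> C i6" using w_COf[OF ix6] by blast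
  have vV0: "v0 \<in> V" using m0 by (rule memV_A)
  have vV1: "v1 \<in> V" using m1 by (rule memV_A)
  have vV2: "v2 \<in> V" using ix0 m2 by (rule memV_B)
  have vV3: "v3 \<in> V" using ix1 m3 by (rule memV_B)
  have vV4: "v4 \<in> V" using ix2 m4 by (rule memV_B)
  have vV5: "v5 \<in> V" using ix3 m5 by (rule memV_B)
  have vV9: "v9 \<in> V" using ix0 m9 by (rule memV_C)
  have vV11: "v11 \<in> V" using ix1 m11 by (rule memV_C)
  have vV17: "v17 \<in> V" using ix6 m17 by (rule memV_C)
  show False
    by (smt (z3) F0
      F1
      F11
      F4
      F6
      noC6[OF vV0 vV3 vV11 vV9 vV2 vV1]
      no2P3[OF vV2 vV9 vV11 vV5 vV0 vV4]
      no2P3[OF vV0 vV4 vV2 vV3 vV11 vV17]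
      no2P3[OF vV0 vV5 vV3 vV2 vV9 vV17]
      no2P3[OF vV2 vV9 vV17 vV3 vV0 vV1]
      no2P3[OF vV0 vV4 vV3 vV2 vV9 vV17]
      no2P3[OF vV0 vV5 vV2 vV3 vV11 vV17]
      adj_AC[OF m0 m11 ix1]
      adj_AC[OF m0 m17 ix6]
      adj_AC[OF m0 m9 ix0]
      adj_CC[OF m11 m17 ix1 ix6]
      adj_AC[OF m1 m11 ix1]
      adj_AC[OF m1 m17 ix6]
      adj_AC[OF m1 m9 ix0]
      adj_BC[OF m2 m11 ix0 ix1]
      adj_BC[OF m2 m17 ix0 ix6]
      adj_BB[OF m2 m3 ix0 ix1]
      adj_BB[OF m2 m4 ix0 ix2]
      adj_BB[OF m2 m5 ix0 ix3]
      adj_BC[OF m3 m17 ix1 ix6]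
      adj_BB[OF m3 m4 ix1 ix2]
      adj_BB[OF m3 m5 ix1 ix3]
      adj_BC[OF m3 m9 ix1 ix0]
      adj_BC[OF m4 m11 ix2 ix1]
      adj_BC[OF m4 m17 ix2 ix6]
      adj_BB[OF m4 m5 ix2 ix3]
      adj_BC[OF m4 m9 ix2 ix0]
      adj_BC[OF m5 m11 ix3 ix1]
      adj_BC[OF m5 m17 ix3 ix6]
      adj_BC[OF m5 m9 ix3 ix0]
      adj_CC[OF m9 m11 ix0 ix1]
      adj_CC[OF m9 m17 ix0 ix6]
      cl_AA[OF m0 m1]
      cl_BB[OF m2 m4 ix0 ix2]
      cl_BB[OF m2 m5 ix0 ix3]
      cl_BB[OF m3 m4 ix1 ix2]
      cl_BB[OF m3 m5 ix1 ix3]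
      kd_AC[OF m0 m11 ix1]
      kd_AC[OF m0 m17 ix6]
      kd_AB[OF m0 m2 ix0]
      kd_AB[OF m0 m3 ix1]
      kd_AB[OF m0 m4 ix2]
      kd_AB[OF m0 m5 ix3]
      kd_AC[OF m0 m9 ix0]
      kd_CC[OF m11 m17 ix1 ix6]
      kd_AC[OF m1 m11 ix1]
      kd_AC[OF m1 m17 ix6]
      kd_AB[OF m1 m2 ix0]
      kd_AB[OF m1 m3 ix1]
      kd_AC[OF m1 m9 ix0]
      kd_BC[OF m2 m11 ix0 ix1]
      kd_BC[OF m2 m17 ix0 ix6]
      kd_BB[OF m2 m3 ix0 ix1]
      kd_BC[OF m2 m9 ix0 ix0]
      kd_BC[OF m3 m11 ix1 ix1]
      kd_BC[OF m3 m17 ix1 ix6]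
      kd_BC[OF m3 m9 ix1 ix0]
      kd_BC[OF m4 m11 ix2 ix1]
      kd_BC[OF m4 m17 ix2 ix6]
      kd_BB[OF m4 m5 ix2 ix3]
      kd_BC[OF m4 m9 ix2 ix0]
      kd_BC[OF m5 m11 ix3 ix1]
      kd_BC[OF m5 m17 ix3 ix6]
      kd_BC[OF m5 m9 ix3 ix0]
      kd_CC[OF m9 m11 ix0 ix1]
      kd_CC[OF m9 m17 ix0 ix6]
      Esym[of v0 v11]
      Esym[of v0 v17]
      Esym[of v0 v2]
      Esym[of v0 v3]
      Esym[of v0 v5]
      Esym[of v0 v9]
      Esym[of v1 v11]
      Esym[of v1 v17]
      Esym[of v1 v3]
      Esym[of v1 v9]
      Esym[of v2 v11]
      Esym[of v2 v3]
      Esym[of v2 v4]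
      Esym[of v2 v5]
      Esym[of v2 v9]
      Esym[of v3 v17]
      Esym[of v3 v4]
      Esym[of v3 v5]
      Esym[of v3 v9]
      Esym[of v4 v11]
      Esym[of v4 v5]
      Esym[of v4 v9]
      Esym[of v5 v11]
      Esym[of v5 v9]
      Esym[of v9 v11])
qed

lemma tpP4:
  assumes "x0 \<in> B l0" "x1 \<in> B l1" "x2 \<in> C l2" "x3 \<in> C l3" "l0 \<in> {1..t}" "l1 \<in> {1..t}" "l2 \<in> {1..t}" "l3 \<in> {1..t}"
  shows "\<not> (((x0 \<noteq> x1) \<and> (x2 \<noteq> x3) \<and> (l0 = l1) \<and> (l0 = l2) \<and> (l0 = l3) \<and> (E x0 x2) \<and> (\<not> (E x1 x2)) \<and> (E x1 x3) \<and> (\<not> (E x0 x3))))"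
  using L4_raw[of l0 x0 x1 x2 x3] assms by blast

lemma tpP5:
  assumes "x0 \<in> A" "x1 \<in> A" "x2 \<in> B l2" "x3 \<in> B l3" "l2 \<in> {1..t}" "l3 \<in> {1..t}"
  shows "\<not> (((x0 \<noteq> x1) \<and> (x2 \<noteq> x3) \<and> (E x0 x2) \<and> (\<not> (E x1 x2)) \<and> (E x1 x3) \<and> (\<not> (E x0 x3))))"
  using L5_raw[of l2 l3 x0 x1 x2 x3] assms by blast

lemma tpP6:
  assumes "x0 \<in> A" "x1 \<in> A" "x2 \<in> B l2" "x3 \<in> B l3" "l2 \<in> {1..t}" "l3 \<in> {1..t}"
  shows "\<not> (((x0 \<noteq> x1) \<and> (x2 \<noteq> x3) \<and> (l2 \<noteq> l3) \<and> (\<not> (E x0 x2)) \<and> (\<not> (E x1 x3))))"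
  using L6_raw[of l2 l3 x0 x1 x2 x3] assms by blast

lemma tpP6b:
  assumes "x0 \<in> A" "x1 \<in> B l1" "x2 \<in> B l2" "l1 \<in> {1..t}" "l2 \<in> {1..t}"
  shows "\<not> (((x1 \<noteq> x2) \<and> (l1 \<noteq> l2) \<and> (\<not> (E x0 x1)) \<and> (\<not> (E x0 x2))))"
  using L6_raw[of l1 l2 x0 x0 x1 x2] assms by blast

lemma L7_raw:
  assumes ix0: "i0 \<in> {1..t}"
    and m0: "v0 \<in> A"
    and m1: "v1 \<in> B i0"
    and F0: "\<not> (E v0 v1)"
    and t4: "4 \<le> t"
  shows False
proof -
  obtain i1 i2 v2 v3 where ix1: "i1 \<in> {1..t}" and ix2: "i2 \<in> {1..t}" and m2: "v2 \<in> B i1" and m3: "v3 \<in> B i2" and F1: "((i1 \<noteq> i2) \<and> (E v0 v2) \<and> (E v0 v3))" using w_two[OF m0] by blast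
  obtain v5 where m5: "v5 \<in> C i0" and F3: "E v1 v5" using w_nC[OF m1 ix0] by blast
  obtain v7 where m7: "v7 \<in> C i2" and F5: "E v3 v7" using w_nC[OF m3 ix2] by blast
  obtain i3 where ix3: "i3 \<in> {1..t}" and F6: "((i0 \<noteq> i1) \<longrightarrow> (((i3 \<noteq> i0) \<and> (i3 \<noteq> i1))))" using w_third[of i0 i1] by blast
  obtain i4 where ix4: "i4 \<in> {1..t}" and F7: "(((i0 \<noteq> i1 \<and> i0 \<noteq> i3 \<and> i1 \<noteq> i3)) \<longrightarrow> ((i0 \<noteq> i1 \<and> i0 \<noteq> i3 \<and> i0 \<noteq> i4 \<and> i1 \<noteq> i3 \<and> i1 \<noteq> i4 \<and> i3 \<noteq> i4)))" using w_fourth[OF t4, of i0 i1 i3] by blast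
  obtain i5 where ix5: "i5 \<in> {1..t}" and F8: "((i0 \<noteq> i2) \<longrightarrow> (((i5 \<noteq> i0) \<and> (i5 \<noteq> i2))))" using w_third[of i0 i2] by blast
  obtain i6 where ix6: "i6 \<in> {1..t}" and F9: "(((i0 \<noteq> i2 \<and> i0 \<noteq> i5 \<and> i2 \<noteq> i5)) \<longrightarrow> ((i0 \<noteq> i2 \<and> i0 \<noteq> i5 \<and> i0 \<noteq> i6 \<and> i2 \<noteq> i5 \<and> i2 \<noteq> i6 \<and> i5 \<noteq> i6)))" using w_fourth[OF t4, of i0 i2 i5] by blast
  obtain v8 where m8: "v8 \<in> B i3" using w_BOf[OF ix3] by blast
  obtain v11 where m11: "v11 \<in> C i4" using w_COf[OF ix4] by blast
  obtain v12 where m12: "v12 \<in> B i5" using w_BOf[OF ix5] by blast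
  obtain v14 where m14: "v14 \<in> B i6" using w_BOf[OF ix6] by blast
  have vV0: "v0 \<in> V" using m0 by (rule memV_A)
  have vV1: "v1 \<in> V" using ix0 m1 by (rule memV_B)
  have vV2: "v2 \<in> V" using ix1 m2 by (rule memV_B)
  have vV3: "v3 \<in> V" using ix2 m3 by (rule memV_B)
  have vV5: "v5 \<in> V" using ix0 m5 by (rule memV_C)
  have vV7: "v7 \<in> V" using ix2 m7 by (rule memV_C)
  have vV8: "v8 \<in> V" using ix3 m8 by (rule memV_B)
  have vV11: "v11 \<in> V" using ix4 m11 by (rule memV_C)
  have vV12: "v12 \<in> V" using ix5 m12 by (rule memV_B)
  have vV14: "v14 \<in> V" using ix6 m14 by (rule memV_B)
  show False
    by (smt (z3) F0
      F1
      F3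
      F6
      F7
      F8
      F9
      tpP6b[OF m0 m1 m12 ix0 ix5]
      tpP6b[OF m0 m1 m14 ix0 ix6]
      no2P3[OF vV1 vV5 vV7 vV12 vV0 vV14]
      tpP6b[OF m0 m8 m1 ix3 ix0]
      no2P3[OF vV2 vV0 vV8 vV1 vV5 vV11]
      adj_AC[OF m0 m11 ix4]
      adj_AC[OF m0 m5 ix0]
      adj_AC[OF m0 m7 ix2]
      adj_BB[OF m12 m14 ix5 ix6]
      adj_BC[OF m1 m11 ix0 ix4]
      adj_BB[OF m1 m12 ix0 ix5]
      adj_BB[OF m1 m14 ix0 ix6]
      adj_BB[OF m1 m2 ix0 ix1]
      adj_BC[OF m1 m7 ix0 ix2]
      adj_BB[OF m1 m8 ix0 ix3]
      adj_BC[OF m2 m11 ix1 ix4]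
      adj_BC[OF m2 m5 ix1 ix0]
      adj_BB[OF m2 m8 ix1 ix3]
      adj_CC[OF m5 m11 ix0 ix4]
      adj_CB[OF m5 m12 ix0 ix5]
      adj_CB[OF m5 m14 ix0 ix6]
      adj_CC[OF m5 m7 ix0 ix2]
      adj_CB[OF m5 m8 ix0 ix3]
      adj_CB[OF m7 m12 ix2 ix5]
      adj_CB[OF m7 m14 ix2 ix6]
      adj_BC[OF m8 m11 ix3 ix4]
      kd_AB[OF m0 m1 ix0]
      kd_AC[OF m0 m11 ix4]
      kd_AB[OF m0 m12 ix5]
      kd_AB[OF m0 m14 ix6]
      kd_AB[OF m0 m2 ix1]
      kd_AC[OF m0 m5 ix0]
      kd_AC[OF m0 m7 ix2]
      kd_AB[OF m0 m8 ix3]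
      kd_BB[OF m12 m14 ix5 ix6]
      kd_BC[OF m1 m11 ix0 ix4]
      kd_BB[OF m1 m12 ix0 ix5]
      kd_BB[OF m1 m14 ix0 ix6]
      kd_BC[OF m1 m5 ix0 ix0]
      kd_BC[OF m1 m7 ix0 ix2]
      kd_BC[OF m2 m11 ix1 ix4]
      kd_BC[OF m2 m5 ix1 ix0]
      kd_BB[OF m2 m8 ix1 ix3]
      kd_CC[OF m5 m11 ix0 ix4]
      kd_CB[OF m5 m12 ix0 ix5]
      kd_CB[OF m5 m14 ix0 ix6]
      kd_CC[OF m5 m7 ix0 ix2]
      kd_CB[OF m5 m8 ix0 ix3]
      kd_CB[OF m7 m12 ix2 ix5]
      kd_CB[OF m7 m14 ix2 ix6]
      kd_BC[OF m8 m11 ix3 ix4]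
      Esym[of v0 v1]
      Esym[of v0 v12]
      Esym[of v0 v2]
      Esym[of v0 v5]
      Esym[of v0 v7]
      Esym[of v1 v2]
      Esym[of v1 v8]
      Esym[of v5 v8])
qed

lemma L8_raw:
  assumes ix0: "i0 \<in> {1..t}"
    and ix1: "i1 \<in> {1..t}"
    and m0: "v0 \<in> A"
    and m1: "v1 \<in> B i0"
    and m2: "v2 \<in> B i1"
    and m3: "v3 \<in> C i1"
    and F0: "((\<not> (E v0 v1)) \<and> (\<not> (E v2 v3)))"
  shows False
proof -
  obtain i2 i3 v4 v5 where ix2: "i2 \<in> {1..t}" and ix3: "i3 \<in> {1..t}" and m4: "v4 \<in> B i2" and m5: "v5 \<in> B i3" and F1: "((i2 \<noteq> i3) \<and> (E v0 v4) \<and> (E v0 v5))" using w_two[OF m0] by blast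
  obtain v7 where m7: "v7 \<in> C i0" and F3: "E v1 v7" using w_nC[OF m1 ix0] by blast
  obtain v10 where m10: "v10 \<in> C i3" and F6: "E v5 v10" using w_nC[OF m5 ix3] by blast
  obtain v12 where m12: "v12 \<in> C i2" and F8: "E v4 v12" using w_nC[OF m4 ix2] by blast
  obtain i4 where ix4: "i4 \<in> {1..t}" and F9: "((i0 \<noteq> i3) \<longrightarrow> (((i4 \<noteq> i0) \<and> (i4 \<noteq> i3))))" using w_third[of i0 i3] by blast
  obtain i5 where ix5: "i5 \<in> {1..t}" and F11: "((i0 \<noteq> i2) \<longrightarrow> (((i5 \<noteq> i0) \<and> (i5 \<noteq> i2))))" using w_third[of i0 i2] by blast
  obtain v13 where m13: "v13 \<in> B i4" using w_BOf[OF ix4] by blast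
  obtain v16 where m16: "v16 \<in> B i5" using w_BOf[OF ix5] by blast
  have vV0: "v0 \<in> V" using m0 by (rule memV_A)
  have vV1: "v1 \<in> V" using ix0 m1 by (rule memV_B)
  have vV2: "v2 \<in> V" using ix1 m2 by (rule memV_B)
  have vV3: "v3 \<in> V" using ix1 m3 by (rule memV_C)
  have vV4: "v4 \<in> V" using ix2 m4 by (rule memV_B)
  have vV5: "v5 \<in> V" using ix3 m5 by (rule memV_B)
  have vV7: "v7 \<in> V" using ix0 m7 by (rule memV_C)
  have vV10: "v10 \<in> V" using ix3 m10 by (rule memV_C)
  have vV12: "v12 \<in> V" using ix2 m12 by (rule memV_C)
  have vV13: "v13 \<in> V" using ix4 m13 by (rule memV_B)
  have vV16: "v16 \<in> V" using ix5 m16 by (rule memV_B)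
  show False
    by (smt (z3) F0
      F1
      F11
      F3
      F6
      F8
      F9
      tpP6b[OF m0 m1 m2 ix0 ix1]
      noC6[OF vV1 vV3 vV10 vV5 vV0 vV2]
      noC6[OF vV3 vV1 vV2 vV0 vV4 vV12]
      tpP6b[OF m0 m1 m13 ix0 ix4]
      no2P3[OF vV1 vV7 vV3 vV5 vV0 vV13]
      no2P3[OF vV3 vV7 vV1 vV2 vV0 vV13]
      no2P3[OF vV5 vV0 vV13 vV3 vV1 vV2]
      no2P3[OF vV3 vV7 vV1 vV2 vV0 vV5]
      tpP6b[OF m0 m1 m16 ix0 ix5]
      no2P3[OF vV1 vV7 vV3 vV2 vV0 vV16]
      no2P3[OF vV2 vV0 vV4 vV1 vV7 vV3]
      no2P3[OF vV1 vV7 vV3 vV4 vV0 vV16]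
      no2P3[OF vV3 vV1 vV2 vV4 vV0 vV16]
      adj_AC[OF m0 m10 ix3]
      adj_AC[OF m0 m12 ix2]
      adj_AC[OF m0 m3 ix1]
      adj_AC[OF m0 m7 ix0]
      adj_BC[OF m1 m10 ix0 ix3]
      adj_BC[OF m1 m12 ix0 ix2]
      adj_BB[OF m1 m13 ix0 ix4]
      adj_BB[OF m1 m16 ix0 ix5]
      adj_BB[OF m1 m2 ix0 ix1]
      adj_BC[OF m1 m3 ix0 ix1]
      adj_BB[OF m1 m4 ix0 ix2]
      adj_BB[OF m1 m5 ix0 ix3]
      adj_BC[OF m2 m10 ix1 ix3]
      adj_BC[OF m2 m12 ix1 ix2]
      adj_BB[OF m2 m13 ix1 ix4]
      adj_BB[OF m2 m16 ix1 ix5]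
      adj_BB[OF m2 m4 ix1 ix2]
      adj_BB[OF m2 m5 ix1 ix3]
      adj_BC[OF m2 m7 ix1 ix0]
      adj_CC[OF m3 m10 ix1 ix3]
      adj_CC[OF m3 m12 ix1 ix2]
      adj_CB[OF m3 m13 ix1 ix4]
      adj_CB[OF m3 m16 ix1 ix5]
      adj_CB[OF m3 m4 ix1 ix2]
      adj_CB[OF m3 m5 ix1 ix3]
      adj_CC[OF m3 m7 ix1 ix0]
      adj_BB[OF m4 m16 ix2 ix5]
      adj_BC[OF m4 m7 ix2 ix0]
      adj_BB[OF m5 m13 ix3 ix4]
      adj_BC[OF m5 m7 ix3 ix0]
      adj_CB[OF m7 m13 ix0 ix4]
      adj_CB[OF m7 m16 ix0 ix5]
      cl_BB[OF m1 m2 ix0 ix1]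
      cl_CC[OF m3 m7 ix1 ix0]
      kd_AB[OF m0 m1 ix0]
      kd_AC[OF m0 m10 ix3]
      kd_AC[OF m0 m12 ix2]
      kd_AB[OF m0 m13 ix4]
      kd_AB[OF m0 m16 ix5]
      kd_AB[OF m0 m2 ix1]
      kd_AC[OF m0 m3 ix1]
      kd_AB[OF m0 m4 ix2]
      kd_AB[OF m0 m5 ix3]
      kd_AC[OF m0 m7 ix0]
      kd_BC[OF m1 m10 ix0 ix3]
      kd_BC[OF m1 m12 ix0 ix2]
      kd_BB[OF m1 m13 ix0 ix4]
      kd_BB[OF m1 m16 ix0 ix5]
      kd_BB[OF m1 m2 ix0 ix1]
      kd_BC[OF m1 m3 ix0 ix1]
      kd_BB[OF m1 m4 ix0 ix2]
      kd_BB[OF m1 m5 ix0 ix3]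
      kd_BC[OF m1 m7 ix0 ix0]
      kd_BC[OF m2 m10 ix1 ix3]
      kd_BC[OF m2 m12 ix1 ix2]
      kd_BB[OF m2 m13 ix1 ix4]
      kd_BB[OF m2 m16 ix1 ix5]
      kd_BC[OF m2 m3 ix1 ix1]
      kd_BB[OF m2 m4 ix1 ix2]
      kd_BB[OF m2 m5 ix1 ix3]
      kd_BC[OF m2 m7 ix1 ix0]
      kd_CC[OF m3 m10 ix1 ix3]
      kd_CC[OF m3 m12 ix1 ix2]
      kd_CB[OF m3 m13 ix1 ix4]
      kd_CB[OF m3 m16 ix1 ix5]
      kd_CB[OF m3 m4 ix1 ix2]
      kd_CB[OF m3 m5 ix1 ix3]
      kd_CC[OF m3 m7 ix1 ix0]
      kd_BC[OF m4 m12 ix2 ix2]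
      kd_BB[OF m4 m16 ix2 ix5]
      kd_BC[OF m4 m7 ix2 ix0]
      kd_BC[OF m5 m10 ix3 ix3]
      kd_BB[OF m5 m13 ix3 ix4]
      kd_BC[OF m5 m7 ix3 ix0]
      kd_CB[OF m7 m13 ix0 ix4]
      kd_CB[OF m7 m16 ix0 ix5]
      Esym[of v0 v1]
      Esym[of v0 v10]
      Esym[of v0 v2]
      Esym[of v0 v3]
      Esym[of v0 v4]
      Esym[of v0 v5]
      Esym[of v0 v7]
      Esym[of v1 v13]
      Esym[of v1 v2]
      Esym[of v1 v3]
      Esym[of v1 v4]
      Esym[of v1 v5]
      Esym[of v1 v7]
      Esym[of v2 v10]
      Esym[of v2 v13]
      Esym[of v2 v3]
      Esym[of v2 v5]
      Esym[of v2 v7]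
      Esym[of v3 v13]
      Esym[of v3 v4]
      Esym[of v3 v5]
      Esym[of v3 v7]
      Esym[of v4 v7]
      Esym[of v5 v10]
      Esym[of v5 v7])
qed

lemma finA: "finite A" by (rule finite_subset[OF _ finV]) (use memV_A in blast)
lemma finB: "i \<in> {1..t} \<Longrightarrow> finite (B i)" by (rule finite_subset[OF _ finV]) (use memV_B in blast)
lemma finC: "i \<in> {1..t} \<Longrightarrow> finite (C i)" by (rule finite_subset[OF _ finV]) (use memV_C in blast)
lemma memV_cases: "u \<in> V \<Longrightarrow> u \<in> A \<or> (\<exists>i\<in>{1..t}. u \<in> B i) \<or> (\<exists>i\<in>{1..t}. u \<in> C i)"
  using cover by blast
lemma finBB: "finite (\<Union>i\<in>{1..t}. B i)" using finB by blast
lemma finCC: "finite (\<Union>i\<in>{1..t}. C i)" using finC by blast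
lemma finN: "finite (nbhd V E x)" unfolding nbhd_def using finV by simp

lemma cmpBC:
  assumes i: "i \<in> {1..t}" and x: "x \<in> B i" and y: "y \<in> B i"
  shows "nbhd V E x \<inter> C i \<subseteq> nbhd V E y \<inter> C i \<or> nbhd V E y \<inter> C i \<subseteq> nbhd V E x \<inter> C i"
proof (rule ccontr)
  assume "\<not> ?thesis"
  then obtain c1 c2 where c1: "c1 \<in> C i" "E x c1" "\<not> E y c1" and c2: "c2 \<in> C i" "E y c2" "\<not> E x c2"
    unfolding nbhd_def by blast
  show False using L4_raw[of i x y c1 c2] i x y c1 c2 by blast
qed

lemma cmpCB:
  assumes i: "i \<in> {1..t}" and x: "x \<in> C i" and y: "y \<in> C i"
  shows "nbhd V E x \<inter> B i \<subseteq> nbhd V E y \<inter> B i \<or> nbhd V E y \<inter> B i \<subseteq> nbhd V E x \<inter> B i"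
proof (rule ccontr)
  assume "\<not> ?thesis"
  then obtain b1 b2 where b1: "b1 \<in> B i" "E x b1" "\<not> E y b1" and b2: "b2 \<in> B i" "E y b2" "\<not> E x b2"
    unfolding nbhd_def by blast
  show False using L4_raw[of i b1 b2 x y] i x y b1 b2 Esym by blast
qed

lemma cmpA:
  assumes x: "x \<in> A" and y: "y \<in> A"
  shows "nbhd V E x \<inter> (\<Union>i\<in>{1..t}. B i) \<subseteq> nbhd V E y \<inter> (\<Union>i\<in>{1..t}. B i) \<or>
         nbhd V E y \<inter> (\<Union>i\<in>{1..t}. B i) \<subseteq> nbhd V E x \<inter> (\<Union>i\<in>{1..t}. B i)"
proof (rule ccontr)
  assume "\<not> ?thesis"
  then obtain b1 b2 i1 i2 where b1: "i1 \<in> {1..t}" "b1 \<in> B i1" "E x b1" "\<not> E y b1"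
    and b2: "i2 \<in> {1..t}" "b2 \<in> B i2" "E y b2" "\<not> E x b2"
    unfolding nbhd_def by blast
  show False using L5_raw[of i1 i2 x y b1 b2] x y b1 b2 by blast
qed

lemma oneclass:
  assumes "a1 \<in> A" "a2 \<in> A" "i \<in> {1..t}" "j \<in> {1..t}" "b1 \<in> B i" "b2 \<in> B j" "\<not> E a1 b1" "\<not> E a2 b2"
  shows "i = j"
  using L6_raw[of i j a1 a2 b1 b2] assms by blast

lemma t4_complete:
  assumes "4 \<le> t" "a \<in> A" "i \<in> {1..t}" "b \<in> B i" shows "E a b"
  using L7_raw[of i a b] assms by blast

lemma BC_complete:
  assumes "a \<in> A" "i \<in> {1..t}" "b \<in> B i" "\<not> E a b" "j \<in> {1..t}" "b2 \<in> B j" "c2 \<in> C j"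
  shows "E b2 c2"
  using L8_raw[of i j a b b2 c2] assms by blast

lemma degA:
  assumes a: "a \<in> A"
  shows "deg V E a = (card A - 1) + card (nbhd V E a \<inter> (\<Union>i\<in>{1..t}. B i))"
proof -
  have eq: "nbhd V E a = (A - {a}) \<union> (nbhd V E a \<inter> (\<Union>i\<in>{1..t}. B i))"
  proof
    show "nbhd V E a \<subseteq> (A - {a}) \<union> (nbhd V E a \<inter> (\<Union>i\<in>{1..t}. B i))"
    proof
      fix u assume u: "u \<in> nbhd V E a"
      then have uV: "u \<in> V" and au: "E a u" unfolding nbhd_def by auto
      have "u \<notin> C j" if "j \<in> {1..t}" for j using adj_AC[OF a _ that] au by blast
      moreover have "u \<noteq> a" using au irr by blast
      ultimately show "u \<in> (A - {a}) \<union> (nbhd V E a \<inter> (\<Union>i\<in>{1..t}. B i))"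
        using memV_cases[OF uV] u by blast
    qed
    show "(A - {a}) \<union> (nbhd V E a \<inter> (\<Union>i\<in>{1..t}. B i)) \<subseteq> nbhd V E a"
      using A_clique[OF a] memV_A unfolding nbhd_def by blast
  qed
  have d: "(A - {a}) \<inter> (nbhd V E a \<inter> (\<Union>i\<in>{1..t}. B i)) = {}" using dAB by blast
  have "deg V E a = card (A - {a}) + card (nbhd V E a \<inter> (\<Union>i\<in>{1..t}. B i))"
    unfolding deg_def by (subst eq, rule card_Un_disjoint) (use finA finN d in auto)
  then show ?thesis using a finA by simp
qed

lemma degB:
  assumes i: "i \<in> {1..t}" and b: "b \<in> B i"
  shows "deg V E b = card (nbhd V E b \<inter> A) + (card (B i) - 1) + card (nbhd V E b \<inter> C i)"
proof -
  have eq: "nbhd V E b = (nbhd V E b \<inter> A) \<union> (B i - {b}) \<union> (nbhd V E b \<inter> C i)"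
  proof
    show "nbhd V E b \<subseteq> (nbhd V E b \<inter> A) \<union> (B i - {b}) \<union> (nbhd V E b \<inter> C i)"
    proof
      fix u assume u: "u \<in> nbhd V E b"
      then have uV: "u \<in> V" and bu: "E b u" unfolding nbhd_def by auto
      have "u \<notin> C j" if "j \<in> {1..t}" "j \<noteq> i" for j using adj_BC[OF b _ i that(1)] bu that by blast
      moreover have "u \<notin> B j" if "j \<in> {1..t}" "j \<noteq> i" for j using adj_BB[OF b _ i that(1)] bu that by blast
      moreover have "u \<noteq> b" using bu irr by blast
      ultimately show "u \<in> (nbhd V E b \<inter> A) \<union> (B i - {b}) \<union> (nbhd V E b \<inter> C i)"
        using memV_cases[OF uV] u by blast
    qed
    show "(nbhd V E b \<inter> A) \<union> (B i - {b}) \<union> (nbhd V E b \<inter> C i) \<subseteq> nbhd V E b"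
      using B_clique[OF i b] memV_B[OF i] unfolding nbhd_def by blast
  qed
  have d1: "(nbhd V E b \<inter> A) \<inter> (B i - {b}) = {}" using dAB[OF i] by blast
  have d2: "((nbhd V E b \<inter> A) \<union> (B i - {b})) \<inter> (nbhd V E b \<inter> C i) = {}" using dAC[OF i] dBC[OF i i] by blast
  have "deg V E b = card ((nbhd V E b \<inter> A) \<union> (B i - {b})) + card (nbhd V E b \<inter> C i)"
    unfolding deg_def by (subst eq, rule card_Un_disjoint) (use finA finN finB[OF i] d2 in auto)
  also have "card ((nbhd V E b \<inter> A) \<union> (B i - {b})) = card (nbhd V E b \<inter> A) + card (B i - {b})"
    by (rule card_Un_disjoint) (use finA finB[OF i] d1 in auto)
  finally show ?thesis using b finB[OF i] by simp
qed

lemma degC: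
  assumes i: "i \<in> {1..t}" and c: "c \<in> C i"
  shows "deg V E c = (card (\<Union>j\<in>{1..t}. C j) - 1) + card (nbhd V E c \<inter> B i)"
proof -
  let ?CC = "\<Union>j\<in>{1..t}. C j"
  have eq: "nbhd V E c = (?CC - {c}) \<union> (nbhd V E c \<inter> B i)"
  proof
    show "nbhd V E c \<subseteq> (?CC - {c}) \<union> (nbhd V E c \<inter> B i)"
    proof
      fix u assume u: "u \<in> nbhd V E c"
      then have uV: "u \<in> V" and cu: "E c u" unfolding nbhd_def by auto
      have "u \<notin> A" using adj_CA[OF c _ i] cu by blast
      moreover have "u \<notin> B j" if "j \<in> {1..t}" "j \<noteq> i" for j using adj_CB[OF c _ i that(1)] cu that by blast
      moreover have "u \<noteq> c" using cu irr by blast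
      ultimately show "u \<in> (?CC - {c}) \<union> (nbhd V E c \<inter> B i)"
        using memV_cases[OF uV] u by blast
    qed
    show "(?CC - {c}) \<union> (nbhd V E c \<inter> B i) \<subseteq> nbhd V E c"
    proof
      fix u assume "u \<in> (?CC - {c}) \<union> (nbhd V E c \<inter> B i)"
      then consider "u \<in> nbhd V E c" | j where "j \<in> {1..t}" "u \<in> C j" "u \<noteq> c" by blast
      then show "u \<in> nbhd V E c"
      proof cases
        case (2 j)
        have "E c u"
        proof (cases "j = i")
          case True then show ?thesis using C_clique[OF i c] 2 by blast
        next
          case False then show ?thesis using adj_CC[OF c 2(2) i 2(1)] by blast
        qed
        then show ?thesis using memV_C[OF 2(1,2)] unfolding nbhd_def by blast
      qed simp
    qed
  qed
  have d: "(?CC - {c}) \<inter> (nbhd V E c \<inter> B i) = {}" using dBC[OF i] by blast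
  have "deg V E c = card (?CC - {c}) + card (nbhd V E c \<inter> B i)"
    unfolding deg_def by (subst eq, rule card_Un_disjoint) (use finCC finN d in auto)
  moreover have "c \<in> ?CC" using c i by blast
  ultimately show ?thesis using finCC by simp
qed

lemma bij_in: "bij_betw f {1..n} S \<Longrightarrow> k \<in> {1..n} \<Longrightarrow> f k \<in> S"
  by (rule bij_betw_apply)
lemma bij_surj: "bij_betw f {1..n} S \<Longrightarrow> x \<in> S \<Longrightarrow> \<exists>k\<in>{1..n}. f k = x"
  unfolding bij_betw_def by blast

lemma top_from_chain:
  assumes f: "bij_betw f {1..n} S" and chain: "\<forall>k. 1 \<le> k \<and> k < n \<longrightarrow> N (f (Suc k)) \<subseteq> N (f k)"
    and cov: "\<And>x. x \<in> T \<Longrightarrow> \<exists>y\<in>S. x \<in> N y" and sub: "N (f 1) \<subseteq> T"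
  shows "N (f 1) = T"
proof
  show "T \<subseteq> N (f 1)"
  proof
    fix x assume "x \<in> T"
    then obtain y where y: "y \<in> S" "x \<in> N y" using cov by blast
    then obtain k where k: "k \<in> {1..n}" "f k = y" using bij_surj[OF f] by blast
    have "N (f k) \<subseteq> N (f 1)" using chain_mono[where N=N and f=f and n=n and k=1 and j=k, OF chain] k by auto
    then show "x \<in> N (f 1)" using y k by blast
  qed
qed (rule sub)

lemma main:
  fixes a :: "nat \<Rightarrow> 'a" and b c :: "nat \<Rightarrow> nat \<Rightarrow> 'a"
  assumes a_ord: "bij_betw a {1..card A} A"
      "\<forall>k. 1 \<le> k \<and> k < card A \<longrightarrow> deg V E (a (Suc k)) \<le> deg V E (a k)"
    and b_ord: "\<forall>i\<in>{1..t}. bij_betw (b i) {1..card (B i)} (B i) \<and>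
      (\<forall>k. 1 \<le> k \<and> k < card (B i) \<longrightarrow> deg V E (b i (Suc k)) \<le> deg V E (b i k))"
    and c_ord: "\<forall>i\<in>{1..t}. bij_betw (c i) {1..card (C i)} (C i) \<and>
      (\<forall>k. 1 \<le> k \<and> k < card (C i) \<longrightarrow> deg V E (c i (Suc k)) \<le> deg V E (c i k))"
  shows
    "(clique E A \<and> (\<forall>i\<in>{1..t}. clique E (B i) \<and> clique E (C i)))
     \<and> (complete_to E A (\<Union>i\<in>{1..t}. B i) \<or>
        (t = 3 \<and>
         (\<exists>i0\<in>{1..3}.
            (\<Union>i\<in>{1..t}. B i) - B i0 \<subseteq> nbhd V E (a (card A)) \<inter> (\<Union>i\<in>{1..t}. B i) \<and>
            (\<forall>k. 1 \<le> k \<and> k < card A \<longrightarrow>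
               nbhd V E (a (Suc k)) \<inter> (\<Union>i\<in>{1..t}. B i) \<subseteq> nbhd V E (a k) \<inter> (\<Union>i\<in>{1..t}. B i)) \<and>
            nbhd V E (a 1) \<inter> (\<Union>i\<in>{1..t}. B i) = (\<Union>i\<in>{1..t}. B i)) \<and>
         (\<forall>i\<in>{1..3}. complete_to E (B i) (C i))))
     \<and> (\<forall>i\<in>{1..t}.
          ({c i 1} \<subseteq> nbhd V E (b i (card (B i))) \<inter> C i \<and>
           (\<forall>k. 1 \<le> k \<and> k < card (B i) \<longrightarrow>
              nbhd V E (b i (Suc k)) \<inter> C i \<subseteq> nbhd V E (b i k) \<inter> C i) \<and>
           nbhd V E (b i 1) \<inter> C i = C i) \<and>
          ({b i 1} \<subseteq> nbhd V E (c i (card (C i))) \<inter> B i \<and>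
           (\<forall>k. 1 \<le> k \<and> k < card (C i) \<longrightarrow>
              nbhd V E (c i (Suc k)) \<inter> B i \<subseteq> nbhd V E (c i k) \<inter> B i) \<and>
           nbhd V E (c i 1) \<inter> B i = B i))
     \<and> (complete_to E A (\<Union>i\<in>{1..t}. B i) \<longrightarrow> villa_partition V E t A B C)
     \<and> (\<not> complete_to E A (\<Union>i\<in>{1..t}. B i) \<longrightarrow> t = 3 \<and> basket_partition V E A B C {})"
proof -
  let ?BB = "\<Union>i\<in>{1..t}. B i"
  let ?CC = "\<Union>i\<in>{1..t}. C i"
  have cl: "clique E A \<and> (\<forall>i\<in>{1..t}. clique E (B i) \<and> clique E (C i))"
    unfolding clique_def using A_clique B_clique C_clique by blast
  have cardA: "1 \<le> card A" using FP(3) finA by (simp add: Suc_leI card_gt_0_iff)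
  have cardB: "i \<in> {1..t} \<Longrightarrow> 1 \<le> card (B i)" for i using FP(4) finB by (simp add: Suc_leI card_gt_0_iff)
  have cardC: "i \<in> {1..t} \<Longrightarrow> 1 \<le> card (C i)" for i using FP(4) finC by (simp add: Suc_leI card_gt_0_iff)
  have Achain: "\<forall>k. 1 \<le> k \<and> k < card A \<longrightarrow> nbhd V E (a (Suc k)) \<inter> ?BB \<subseteq> nbhd V E (a k) \<inter> ?BB"
    by (rule chain_order[OF a_ord(1) a_ord(2), where K = "card A - 1"]) (use degA cmpA finN in auto)
  have Atop: "nbhd V E (a 1) \<inter> ?BB = ?BB"
  proof (rule top_from_chain[OF a_ord(1) Achain])
    fix x assume "x \<in> ?BB"
    then obtain i where i: "i \<in> {1..t}" "x \<in> B i" by blast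
    then obtain w where "w \<in> A" "E x w" using w_nA by blast
    then show "\<exists>y\<in>A. x \<in> nbhd V E y \<inter> ?BB" using i memV_B Esym unfolding nbhd_def by blast
  qed blast
  have a1: "a 1 \<in> A" and alast: "a (card A) \<in> A" using bij_in[OF a_ord(1)] cardA by auto
  have bi: "i \<in> {1..t} \<Longrightarrow> bij_betw (b i) {1..card (B i)} (B i)" for i using b_ord by blast
  have ci: "i \<in> {1..t} \<Longrightarrow> bij_betw (c i) {1..card (C i)} (C i)" for i using c_ord by blast
  have NC: "t = 3 \<and> (\<exists>i0\<in>{1..3}. (\<forall>x\<in>A. ?BB - B i0 \<subseteq> nbhd V E x)) \<and> (\<forall>i\<in>{1..t}. complete_to E (B i) (C i))"
    if nc: "\<not> complete_to E A ?BB"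
  proof -
    obtain a0 i0 b0 where a0: "a0 \<in> A" and i0: "i0 \<in> {1..t}" and b0: "b0 \<in> B i0" and n0: "\<not> E a0 b0"
      using nc unfolding complete_to_def by blast
    have t: "t = 3"
    proof (rule ccontr)
      assume "t \<noteq> 3" then have "4 \<le> t" using t3 by simp
      then show False using t4_complete a0 i0 b0 n0 by blast
    qed
    have X: "\<forall>x\<in>A. ?BB - B i0 \<subseteq> nbhd V E x"
    proof (intro ballI subsetI)
      fix x u assume x: "x \<in> A" and u: "u \<in> ?BB - B i0"
      then obtain j where j: "j \<in> {1..t}" "u \<in> B j" "j \<noteq> i0" by blast
      have "E x u" using oneclass[OF a0 x i0 j(1) b0 j(2) n0] j(3) by blast
      then show "u \<in> nbhd V E x" using memV_B[OF j(1,2)] unfolding nbhd_def by blast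
    qed
    have Y: "\<forall>i\<in>{1..t}. complete_to E (B i) (C i)"
      unfolding complete_to_def using BC_complete[OF a0 i0 b0 n0] by blast
    have Z: "i0 \<in> {1..3}" using i0 t by simp
    show ?thesis
    proof (intro conjI)
      show "t = 3" by (rule t)
      show "\<exists>i0\<in>{1..3}. \<forall>x\<in>A. ?BB - B i0 \<subseteq> nbhd V E x" by (rule bexI[where x=i0 and P="\<lambda>j. \<forall>x\<in>A. ?BB - B j \<subseteq> nbhd V E x", OF X Z])
      show "\<forall>i\<in>{1..t}. complete_to E (B i) (C i)" by (rule Y)
    qed
  qed
  have partc: "({c i 1} \<subseteq> nbhd V E (b i (card (B i))) \<inter> C i \<and>
           (\<forall>k. 1 \<le> k \<and> k < card (B i) \<longrightarrow>
              nbhd V E (b i (Suc k)) \<inter> C i \<subseteq> nbhd V E (b i k) \<inter> C i) \<and>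
           nbhd V E (b i 1) \<inter> C i = C i) \<and>
          ({b i 1} \<subseteq> nbhd V E (c i (card (C i))) \<inter> B i \<and>
           (\<forall>k. 1 \<le> k \<and> k < card (C i) \<longrightarrow>
              nbhd V E (c i (Suc k)) \<inter> B i \<subseteq> nbhd V E (c i k) \<inter> B i) \<and>
           nbhd V E (c i 1) \<inter> B i = B i)" if i: "i \<in> {1..t}" for i
  proof -
    have Bchain: "\<forall>k. 1 \<le> k \<and> k < card (B i) \<longrightarrow> nbhd V E (b i (Suc k)) \<inter> C i \<subseteq> nbhd V E (b i k) \<inter> C i"
    proof (cases "complete_to E A ?BB")
      case True
      have NA: "x \<in> B i \<Longrightarrow> nbhd V E x \<inter> A = A" for x
        using True i memV_A Esym unfolding complete_to_def nbhd_def by blast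
      have ordB: "\<forall>k. 1 \<le> k \<and> k < card (B i) \<longrightarrow> deg V E (b i (Suc k)) \<le> deg V E (b i k)"
        using b_ord i by blast
      have dNB: "deg V E x = (card A + (card (B i) - 1)) + card (nbhd V E x \<inter> C i)" if "x \<in> B i" for x
        using degB[OF i that] NA[OF that] by simp
      show ?thesis
        by (rule chain_order[OF bi[OF i] ordB dNB]) (use finN cmpBC[OF i] in auto)
    next
      case False
      then have "complete_to E (B i) (C i)" using NC i by blast
      then have "x \<in> B i \<Longrightarrow> nbhd V E x \<inter> C i = C i" for x
        using memV_C[OF i] unfolding complete_to_def nbhd_def by blast
      then show ?thesis using bij_in[OF bi[OF i]] by auto
    qed
    have Btop: "nbhd V E (b i 1) \<inter> C i = C i"
    proof (rule top_from_chain[OF bi[OF i] Bchain])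
      fix x assume x: "x \<in> C i"
      then obtain w where "w \<in> B i" "E x w" using w_nB i by blast
      then show "\<exists>y\<in>B i. x \<in> nbhd V E y \<inter> C i" using x i memV_C Esym unfolding nbhd_def by blast
    qed blast
    have Cchain: "\<forall>k. 1 \<le> k \<and> k < card (C i) \<longrightarrow> nbhd V E (c i (Suc k)) \<inter> B i \<subseteq> nbhd V E (c i k) \<inter> B i"
    proof -
      have ordC: "\<forall>k. 1 \<le> k \<and> k < card (C i) \<longrightarrow> deg V E (c i (Suc k)) \<le> deg V E (c i k)"
        using c_ord i by blast
      show ?thesis
        by (rule chain_order[OF ci[OF i] ordC degC[OF i]]) (use finN cmpCB[OF i] in auto)
    qed
    have Ctop: "nbhd V E (c i 1) \<inter> B i = B i"
    proof (rule top_from_chain[OF ci[OF i] Cchain])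
      fix x assume x: "x \<in> B i"
      then obtain w where "w \<in> C i" "E x w" using w_nC i by blast
      then show "\<exists>y\<in>C i. x \<in> nbhd V E y \<inter> B i" using x i memV_B Esym unfolding nbhd_def by blast
    qed blast
    have c1: "c i 1 \<in> C i" and blast': "b i (card (B i)) \<in> B i" using bij_in[OF ci[OF i]] bij_in[OF bi[OF i]] cardB[OF i] cardC[OF i] by auto
    have b1: "b i 1 \<in> B i" and clast: "c i (card (C i)) \<in> C i" using bij_in[OF ci[OF i]] bij_in[OF bi[OF i]] cardB[OF i] cardC[OF i] by auto
    have "E (c i 1) (b i (card (B i)))" using Ctop blast' unfolding nbhd_def by blast
    then have X1: "{c i 1} \<subseteq> nbhd V E (b i (card (B i))) \<inter> C i" using c1 memV_C[OF i c1] Esym unfolding nbhd_def by blast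
    have "E (b i 1) (c i (card (C i)))" using Btop clast unfolding nbhd_def by blast
    then have X2: "{b i 1} \<subseteq> nbhd V E (c i (card (C i))) \<inter> B i" using b1 memV_B[OF i b1] Esym unfolding nbhd_def by blast
    show ?thesis using X1 X2 Bchain Btop Cchain Ctop by blast
  qed
  have partb: "complete_to E A ?BB \<or>
        (t = 3 \<and>
         (\<exists>i0\<in>{1..3}.
            ?BB - B i0 \<subseteq> nbhd V E (a (card A)) \<inter> ?BB \<and>
            (\<forall>k. 1 \<le> k \<and> k < card A \<longrightarrow>
               nbhd V E (a (Suc k)) \<inter> ?BB \<subseteq> nbhd V E (a k) \<inter> ?BB) \<and>
            nbhd V E (a 1) \<inter> ?BB = ?BB) \<and>
         (\<forall>i\<in>{1..3}. complete_to E (B i) (C i)))"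
  proof (cases "complete_to E A ?BB")
    case False
    from NC[OF False] obtain i0 where t: "t = 3" and i0: "i0 \<in> {1..3}" and cx: "\<forall>x\<in>A. ?BB - B i0 \<subseteq> nbhd V E x"
      and bc: "\<forall>i\<in>{1..t}. complete_to E (B i) (C i)" by blast
    have "?BB - B i0 \<subseteq> nbhd V E (a (card A)) \<inter> ?BB" using cx alast by blast
    then show ?thesis using t i0 Achain Atop bc by auto
  qed simp
  have partd: "villa_partition V E t A B C" if cp: "complete_to E A ?BB"
    unfolding villa_partition_def
  proof (intro conjI)
    show "is_partition3 V t A B C" by (rule FP(2))
    show "A \<noteq> {}" by (rule FP(3))
    show "clique E A" using cl by blast
    show "\<forall>i\<in>{1..t}. B i \<noteq> {} \<and> C i \<noteq> {} \<and> clique E (B i) \<and> clique E (C i)" using cl FP(4) by blast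
    show "complete_to E A ?BB" by (rule cp)
    show "anticomplete_to E A ?CC" using FP(6) unfolding anticomplete_to_def by blast
    show "\<forall>i\<in>{1..t}. \<forall>j\<in>{1..t}. i \<noteq> j \<longrightarrow> anticomplete_to E (B i) (B j)" by (rule FP(7))
    show "\<forall>i\<in>{1..t}. \<forall>j\<in>{1..t}. i \<noteq> j \<longrightarrow> complete_to E (C i) (C j)" by (rule FP(8))
    show "\<forall>i\<in>{1..t}. \<forall>j\<in>{1..t}. i \<noteq> j \<longrightarrow> anticomplete_to E (B i) (C j)" by (rule FP(9))
    show "\<forall>i\<in>{1..t}. \<exists>\<beta>. bij_betw \<beta> {1..card (B i)} (B i) \<and>
        nbhd V E (\<beta> (card (B i))) \<inter> C i \<noteq> {} \<and>
        (\<forall>k. 1 \<le> k \<and> k < card (B i) \<longrightarrow> nbhd V E (\<beta> (Suc k)) \<inter> C i \<subseteq> nbhd V E (\<beta> k) \<inter> C i) \<and>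
        nbhd V E (\<beta> 1) \<inter> C i = C i"
    proof
      fix i assume i: "i \<in> {1..t}"
      have "b i (card (B i)) \<in> B i" using bij_in[OF bi[OF i]] cardB[OF i] by auto
      then obtain w where "w \<in> C i" "E (b i (card (B i))) w" using w_nC i by blast
      then have "nbhd V E (b i (card (B i))) \<inter> C i \<noteq> {}" using memV_C[OF i] unfolding nbhd_def by blast
      then show "\<exists>\<beta>. bij_betw \<beta> {1..card (B i)} (B i) \<and>
        nbhd V E (\<beta> (card (B i))) \<inter> C i \<noteq> {} \<and>
        (\<forall>k. 1 \<le> k \<and> k < card (B i) \<longrightarrow> nbhd V E (\<beta> (Suc k)) \<inter> C i \<subseteq> nbhd V E (\<beta> k) \<inter> C i) \<and>
        nbhd V E (\<beta> 1) \<inter> C i = C i"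
      proof (intro exI[of _ "b i"] conjI)
        show "bij_betw (b i) {1..card (B i)} (B i)" by (rule bi[OF i])
        show "nbhd V E (b i (card (B i))) \<inter> C i \<noteq> {}" by fact
        show "\<forall>k. 1 \<le> k \<and> k < card (B i) \<longrightarrow> nbhd V E (b i (Suc k)) \<inter> C i \<subseteq> nbhd V E (b i k) \<inter> C i"
          using partc[OF i] by (elim conjE)
        show "nbhd V E (b i 1) \<inter> C i = C i" using partc[OF i] by (elim conjE)
      qed
    qed
  qed
  have parte: "t = 3 \<and> basket_partition V E A B C {}" if nc: "\<not> complete_to E A ?BB"
  proof -
    from NC[OF nc] obtain i0 where t: "t = 3" and i0: "i0 \<in> {1..3}" and cx: "\<forall>x\<in>A. ?BB - B i0 \<subseteq> nbhd V E x"
      and bc: "\<forall>i\<in>{1..t}. complete_to E (B i) (C i)" by blast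
    have P: "is_partition3 V 3 A B C" using FP(2) t by simp
    have "basket_partition V E A B C {}"
      unfolding basket_partition_def
    proof (intro conjI)
      show "A \<union> (\<Union>i\<in>{1..3}. B i) \<union> (\<Union>i\<in>{1..3}. C i) \<union> {} = V" using P unfolding is_partition3_def by simp
      show "\<forall>i\<in>{1..3::nat}. A \<inter> B i = {} \<and> A \<inter> C i = {} \<and> {} \<inter> B i = {} \<and> {} \<inter> C i = {}"
        using P unfolding is_partition3_def by simp
      show "A \<inter> {} = {}" by simp
      show "\<forall>i\<in>{1..3::nat}. \<forall>j\<in>{1..3}. B i \<inter> C j = {}" using P unfolding is_partition3_def by simp
      show "\<forall>i\<in>{1..3::nat}. \<forall>j\<in>{1..3}. i \<noteq> j \<longrightarrow> B i \<inter> B j = {} \<and> C i \<inter> C j = {}"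
        using P unfolding is_partition3_def by simp
      show "A \<noteq> {}" by (rule FP(3))
      show "clique E A" using cl by blast
      show "\<forall>i\<in>{1..3::nat}. B i \<noteq> {} \<and> C i \<noteq> {} \<and> clique E (B i) \<and> clique E (C i)" using cl FP(4) t by simp
      show "clique E {}" unfolding clique_def by simp
      show "\<forall>i\<in>{1..3::nat}. \<forall>j\<in>{1..3}. i \<noteq> j \<longrightarrow> anticomplete_to E (B i) (B j)" using FP(7) t by simp
      show "\<forall>i\<in>{1..3::nat}. \<forall>j\<in>{1..3}. i \<noteq> j \<longrightarrow> complete_to E (C i) (C j)" using FP(8) t by simp
      show "\<exists>i0\<in>{1..3::nat}. complete_to E A ((\<Union>i\<in>{1..3}. B i) - B i0) \<and>
        (\<exists>\<alpha>. bij_betw \<alpha> {1..card A} A \<and>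
          (\<forall>k. 1 \<le> k \<and> k < card A \<longrightarrow> nbhd V E (\<alpha> (Suc k)) \<inter> B i0 \<subseteq> nbhd V E (\<alpha> k) \<inter> B i0) \<and>
          nbhd V E (\<alpha> 1) \<inter> B i0 = B i0)"
      proof (intro bexI conjI exI)
        show "i0 \<in> {1..3}" by (rule i0)
        show "complete_to E A ((\<Union>i\<in>{1..3}. B i) - B i0)"
          using cx t unfolding complete_to_def nbhd_def by blast
        show "bij_betw a {1..card A} A" by (rule a_ord(1))
        show "\<forall>k. 1 \<le> k \<and> k < card A \<longrightarrow> nbhd V E (a (Suc k)) \<inter> B i0 \<subseteq> nbhd V E (a k) \<inter> B i0"
          using Achain i0 t by blast
        show "nbhd V E (a 1) \<inter> B i0 = B i0" using Atop i0 t by blast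
      qed
      show "anticomplete_to E A (\<Union>i\<in>{1..3}. C i)" using FP(6) t unfolding anticomplete_to_def by blast
      show "\<forall>i\<in>{1..3::nat}. complete_to E (B i) (C i)" using bc t by simp
      show "\<forall>i\<in>{1..3::nat}. \<forall>j\<in>{1..3}. i \<noteq> j \<longrightarrow> anticomplete_to E (B i) (C j)" using FP(9) t by simp
      show "\<exists>j0\<in>{1..3::nat}. complete_to E {} (V - (B j0 \<union> C j0 \<union> {})) \<and> anticomplete_to E {} (B j0 \<union> C j0)"
        unfolding complete_to_def anticomplete_to_def by auto
    qed
    then show ?thesis using t by simp
  qed
  show ?thesis
    apply (rule conjI[OF cl])
    apply (rule conjI[OF partb])
    apply (rule conjI)
     apply (intro ballI, rule partc, assumption)
    apply (rule conjI)
     apply (intro impI, erule partd)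
    apply (intro impI, erule parte)
    done
qed

end

theorem lemma5p5:
  fixes V :: "'a set" and E :: "'a \<Rightarrow> 'a \<Rightarrow> bool" and t :: nat
    and A :: "'a set" and B C :: "nat \<Rightarrow> 'a set"
    and a :: "nat \<Rightarrow> 'a" and b c :: "nat \<Rightarrow> nat \<Rightarrow> 'a"
  assumes G: "graph V E"
    and t3: "t \<ge> 3"
    and free: "free_of twoP3_V twoP3_E V E" "free_of (cyc_V 4) (cyc_E 4) V E"
      "free_of (cyc_V 6) (cyc_E 6) V E" "free_of (cyc_V 7) (cyc_E 7) V E"
      "free_of T0_V T0_E V E" "free_of (pent_V (t + 1)) (pent_E (t + 1)) V E"
    and frame: "frame_partition V E t A B C"
    and a_ord: "bij_betw a {1..card A} A"
      "\<forall>k. 1 \<le> k \<and> k < card A \<longrightarrow> deg V E (a (Suc k)) \<le> deg V E (a k)"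
    and b_ord: "\<forall>i\<in>{1..t}. bij_betw (b i) {1..card (B i)} (B i) \<and>
      (\<forall>k. 1 \<le> k \<and> k < card (B i) \<longrightarrow> deg V E (b i (Suc k)) \<le> deg V E (b i k))"
    and c_ord: "\<forall>i\<in>{1..t}. bij_betw (c i) {1..card (C i)} (C i) \<and>
      (\<forall>k. 1 \<le> k \<and> k < card (C i) \<longrightarrow> deg V E (c i (Suc k)) \<le> deg V E (c i k))"
  shows
    "(clique E A \<and> (\<forall>i\<in>{1..t}. clique E (B i) \<and> clique E (C i)))
     \<and> (complete_to E A (\<Union>i\<in>{1..t}. B i) \<or>
        (t = 3 \<and>
         (\<exists>i0\<in>{1..3}.
            (\<Union>i\<in>{1..t}. B i) - B i0 \<subseteq> nbhd V E (a (card A)) \<inter> (\<Union>i\<in>{1..t}. B i) \<and>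
            (\<forall>k. 1 \<le> k \<and> k < card A \<longrightarrow>
               nbhd V E (a (Suc k)) \<inter> (\<Union>i\<in>{1..t}. B i) \<subseteq> nbhd V E (a k) \<inter> (\<Union>i\<in>{1..t}. B i)) \<and>
            nbhd V E (a 1) \<inter> (\<Union>i\<in>{1..t}. B i) = (\<Union>i\<in>{1..t}. B i)) \<and>
         (\<forall>i\<in>{1..3}. complete_to E (B i) (C i))))
     \<and> (\<forall>i\<in>{1..t}.
          ({c i 1} \<subseteq> nbhd V E (b i (card (B i))) \<inter> C i \<and>
           (\<forall>k. 1 \<le> k \<and> k < card (B i) \<longrightarrow>
              nbhd V E (b i (Suc k)) \<inter> C i \<subseteq> nbhd V E (b i k) \<inter> C i) \<and>
           nbhd V E (b i 1) \<inter> C i = C i) \<and>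
          ({b i 1} \<subseteq> nbhd V E (c i (card (C i))) \<inter> B i \<and>
           (\<forall>k. 1 \<le> k \<and> k < card (C i) \<longrightarrow>
              nbhd V E (c i (Suc k)) \<inter> B i \<subseteq> nbhd V E (c i k) \<inter> B i) \<and>
           nbhd V E (c i 1) \<inter> B i = B i))
     \<and> (complete_to E A (\<Union>i\<in>{1..t}. B i) \<longrightarrow> villa_partition V E t A B C)
     \<and> (\<not> complete_to E A (\<Union>i\<in>{1..t}. B i) \<longrightarrow> t = 3 \<and> basket_partition V E A B C {})"
proof -
  interpret frm V E t A B C
    by (rule frm.intro) (rule G free frame)+
  show ?thesis by (rule main[OF a_ord b_ord c_ord])
qed

end
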